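(* Let $R>0$, $K>0$. Then \[ E_e(R,K)=\max_P\ \sup_{0\le\eta\le\rho}\big\{E_0(\rho,\eta,P)-\rho R-\eta K\big\}, \] where \[ E_e(R,K)=\max_P\ \min_{U:\ I_{PU}+|B_{PU}-K|^{+}\le R} D(U\|W|P),\qquad E_0(\rho,\eta,P)=-\log\sum_y\Big[\sum_x P(x)W^{\frac{1+\eta}{1+\rho}}(y|x)\Big]^{1+\rho}. \]
   Context: $\mathcal{X},\mathcal{Y}$ are finite alphabets and $W(y|x)$ is a conditional distribution on $\mathcal{Y}$ given $\mathcal{X}$. Logs are natural. $P$ ranges over distributions on $\mathcal{X}$, $U(y|x)$ over conditional distributions; $PU$ is the joint distribution $P(x)U(y|x)$. $D(U\|W|P)=\sum P(x)U(y|x)\log\frac{U(y|x)}{W(y|x)}$; $I_{PU}$ is the mutual information under $PU$; $B_{PU}=\mathbb{E}_{PU}[-\log W(Y|X)]$; $|t|^{+}=\max\{0,t\}$; a minimum over an empty set is $+\infty$. The supremum is over all real $\rho,\eta$ with $0\le\eta\le\rho$. *)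

theory Defs
  imports "HOL-Analysis.Analysis" "HOL-Library.Extended_Real"
begin

definition is_dist :: "('a::finite \<Rightarrow> real) \<Rightarrow> bool" where
  "is_dist P \<longleftrightarrow> (\<forall>x. 0 \<le> P x) \<and> (\<Sum>x\<in>UNIV. P x) = 1"

definition is_channel :: "('a::finite \<Rightarrow> 'b::finite \<Rightarrow> real) \<Rightarrow> bool" where
  "is_channel U \<longleftrightarrow> (\<forall>x. is_dist (U x))"

definition out_marg :: "('a::finite \<Rightarrow> real) \<Rightarrow> ('a \<Rightarrow> 'b::finite \<Rightarrow> real) \<Rightarrow> 'b \<Rightarrow> real" where
  "out_marg P U y = (\<Sum>x\<in>UNIV. P x * U x y)"

definition cond_div :: "('a::finite \<Rightarrow> real) \<Rightarrow> ('a \<Rightarrow> 'b::finite \<Rightarrow> real) \<Rightarrow> ('a \<Rightarrow> 'b \<Rightarrow> real) \<Rightarrow> ereal" where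
  "cond_div P U W =
     (if \<exists>x y. P x * U x y > 0 \<and> W x y = 0 then \<infinity>
      else ereal (\<Sum>x\<in>UNIV. \<Sum>y\<in>UNIV.
              (if P x * U x y = 0 then 0 else P x * U x y * ln (U x y / W x y))))"

definition mut_info :: "('a::finite \<Rightarrow> real) \<Rightarrow> ('a \<Rightarrow> 'b::finite \<Rightarrow> real) \<Rightarrow> real" where
  "mut_info P U = (\<Sum>x\<in>UNIV. \<Sum>y\<in>UNIV.
      (if P x * U x y = 0 then 0 else P x * U x y * ln (U x y / out_marg P U y)))"

definition B_PU :: "('a::finite \<Rightarrow> real) \<Rightarrow> ('a \<Rightarrow> 'b::finite \<Rightarrow> real) \<Rightarrow> ('a \<Rightarrow> 'b \<Rightarrow> real) \<Rightarrow> ereal" where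
  "B_PU P U W =
     (if \<exists>x y. P x * U x y > 0 \<and> W x y = 0 then \<infinity>
      else ereal (\<Sum>x\<in>UNIV. \<Sum>y\<in>UNIV.
              (if P x * U x y = 0 then 0 else P x * U x y * (- ln (W x y)))))"

definition E_e :: "('a::finite \<Rightarrow> 'b::finite \<Rightarrow> real) \<Rightarrow> real \<Rightarrow> real \<Rightarrow> ereal" where
  "E_e W R K =
     (SUP P\<in>{P. is_dist P}.
        INF U\<in>{U. is_channel U \<and>
                  ereal (mut_info P U) + max 0 (B_PU P U W - ereal K) \<le> ereal R}.
          cond_div P U W)"

definition E_0 :: "('a::finite \<Rightarrow> 'b::finite \<Rightarrow> real) \<Rightarrow> real \<Rightarrow> real \<Rightarrow> ('a \<Rightarrow> real) \<Rightarrow> real" where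
  "E_0 W \<rho> \<eta> P =
     - ln (\<Sum>y\<in>UNIV. (\<Sum>x\<in>UNIV. P x * W x y powr ((1 + \<eta>) / (1 + \<rho>))) powr (1 + \<rho>))"

end

theory Submission
  imports Defs
begin
lemma h_bound: assumes "0 < u" "u \<le> 1" shows "- 2 * sqrt u \<le> u * ln u" "u * ln u \<le> 0"
proof -
  have s: "0 < sqrt u" using assms by simp
  have "ln (1 / sqrt u) \<le> 1 / sqrt u - 1" using s by (intro ln_le_minus_one) simp
  moreover have "ln (1 / sqrt u) = - ln u / 2" using assms by (simp add: ln_div ln_sqrt)
  ultimately have "- ln u \<le> 2 / sqrt u" by simp
  then have "u * (- ln u) \<le> u * (2 / sqrt u)" using assms by (intro mult_left_mono) auto
  also have "u * (2 / sqrt u) = 2 * sqrt u" using assms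
    by (metis mult.commute real_div_sqrt times_divide_eq_right order_less_imp_le)
  finally show "- 2 * sqrt u \<le> u * ln u" by simp
  show "u * ln u \<le> 0" using assms by (simp add: mult_nonneg_nonpos)
qed

lemma h_tendsto: "((\<lambda>u::real. u * ln u) \<longlongrightarrow> 0) (at_right 0)"
proof (rule tendsto_sandwich[where f="\<lambda>u. - 2 * sqrt u" and h="\<lambda>u. 0"])
  have ev: "eventually (\<lambda>u::real. 0 < u \<and> u \<le> 1) (at_right 0)"
    using eventually_at_right_real[of 0 "1::real"] by (rule eventually_mono) auto
  show "eventually (\<lambda>u. - 2 * sqrt u \<le> u * ln u) (at_right 0)"
    using ev by (rule eventually_mono) (use h_bound in auto)
  show "eventually (\<lambda>u. u * ln u \<le> (0::real)) (at_right 0)"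
    by (rule eventually_mono[OF ev]) (use h_bound in auto)
  have "((\<lambda>u::real. - 2 * sqrt u) \<longlongrightarrow> - 2 * sqrt 0) (at_right 0)"
    by (intro tendsto_intros tendsto_within_subset[OF tendsto_ident_at]) auto
  then show "((\<lambda>u::real. - 2 * sqrt u) \<longlongrightarrow> 0) (at_right 0)" by simp
qed simp

lemma cont_h: "continuous_on {0..} (\<lambda>u::real. u * ln u)"
proof (clarsimp simp: continuous_on_eq_continuous_within)
  fix x :: real assume x: "0 \<le> x"
  show "continuous (at x within {0..}) (\<lambda>u. u * ln u)"
  proof (cases "x = 0")
    case True
    have "{0::real..} - {0} = {0<..}" by auto
    then have e: "at (0::real) within {0..} = at_right 0"
      by (simp add: at_within_def)
    show ?thesis using True h_tendsto by (simp add: continuous_within e)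
  next
    case False
    then have "x > 0" using x by simp
    then show ?thesis by (intro continuous_intros) auto
  qed
qed

lemma ln_ge_1_minus_inv: assumes "(0::real) < z" shows "1 - 1 / z \<le> ln z"
proof -
  have "ln (1 / z) \<le> 1 / z - 1" using assms by (intro ln_le_minus_one) simp
  then show ?thesis using assms by (simp add: ln_div)
qed

lemma PT:
  fixes a b A B :: real
  assumes "0 \<le> a" "0 \<le> b" "b = 0 \<Longrightarrow> a = 0" "0 < A" "0 < B"
  shows "a - b * A / B \<le> a * ln (a / b) - a * ln (A / B)"
proof (cases "a = 0")
  case True then show ?thesis using assms by simp
next
  case False
  then have a: "a > 0" and b: "b > 0" using assms by force+
  have z: "0 < a * B / (b * A)" using a b assms by simp
  have "1 - 1 / (a * B / (b * A)) \<le> ln (a * B / (b * A))" by (rule ln_ge_1_minus_inv[OF z])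
  moreover have "ln (a * B / (b * A)) = ln (a / b) - ln (A / B)"
    using a b assms by (simp add: ln_div ln_mult)
  moreover have "1 / (a * B / (b * A)) = b * A / (a * B)" by simp
  ultimately have "1 - b * A / (a * B) \<le> ln (a / b) - ln (A / B)" by simp
  then have "a * (1 - b * A / (a * B)) \<le> a * (ln (a / b) - ln (A / B))"
    using a by (intro mult_left_mono) auto
  moreover have "a * (1 - b * A / (a * B)) = a - b * A / B" using a assms by (simp add: field_simps)
  ultimately show ?thesis by (simp add: algebra_simps)
qed

lemma logsum2:
  fixes a1 a2 b1 b2 :: real
  assumes "0 \<le> a1" "0 \<le> a2" "0 \<le> b1" "0 \<le> b2" "b1 = 0 \<Longrightarrow> a1 = 0" "b2 = 0 \<Longrightarrow> a2 = 0"
  shows "(a1 + a2) * ln ((a1 + a2) / (b1 + b2)) \<le> a1 * ln (a1 / b1) + a2 * ln (a2 / b2)"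
proof (cases "a1 + a2 = 0")
  case True
  then have "a1 = 0" "a2 = 0" using assms by auto
  then show ?thesis by simp
next
  case False
  then have A: "a1 + a2 > 0" using assms by simp
  have B: "b1 + b2 > 0" using assms A by (cases "b1 = 0"; cases "b2 = 0") auto
  have 1: "a1 - b1 * (a1 + a2) / (b1 + b2) \<le> a1 * ln (a1 / b1) - a1 * ln ((a1 + a2) / (b1 + b2))"
    by (rule PT) (use assms A B in auto)
  have 2: "a2 - b2 * (a1 + a2) / (b1 + b2) \<le> a2 * ln (a2 / b2) - a2 * ln ((a1 + a2) / (b1 + b2))"
    by (rule PT) (use assms A B in auto)
  have "b1 * (a1 + a2) / (b1 + b2) + b2 * (a1 + a2) / (b1 + b2) = (b1 + b2) * (a1 + a2) / (b1 + b2)"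
    by (simp add: add_divide_distrib distrib_right)
  also have "\<dots> = a1 + a2" using B by simp
  finally have "b1 * (a1 + a2) / (b1 + b2) + b2 * (a1 + a2) / (b1 + b2) = a1 + a2" .
  then show ?thesis using 1 2 by (simp add: algebra_simps)
qed

lemma LS:
  fixes m c :: "'i \<Rightarrow> real"
  assumes fin: "finite S" and m0: "\<And>i. i \<in> S \<Longrightarrow> 0 \<le> m i" and c0: "\<And>i. i \<in> S \<Longrightarrow> 0 \<le> c i"
    and mc: "\<And>i. i \<in> S \<Longrightarrow> c i = 0 \<Longrightarrow> m i = 0"
    and msum: "(\<Sum>i\<in>S. m i) = 1" and C: "0 < (\<Sum>i\<in>S. c i)"
  shows "- ln (\<Sum>i\<in>S. c i) \<le> (\<Sum>i\<in>S. m i * ln (m i / c i))"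
proof -
  define CC where "CC = (\<Sum>i\<in>S. c i)"
  have "\<And>i. i \<in> S \<Longrightarrow> m i - c i * 1 / CC \<le> m i * ln (m i / c i) - m i * ln (1 / CC)"
    by (rule PT) (use m0 c0 mc C CC_def in auto)
  then have "(\<Sum>i\<in>S. m i - c i * 1 / CC) \<le> (\<Sum>i\<in>S. m i * ln (m i / c i) - m i * ln (1 / CC))"
    by (rule sum_mono)
  moreover have "(\<Sum>i\<in>S. m i - c i * 1 / CC) = 0"
    using C msum by (simp add: sum_subtractf CC_def flip: sum_divide_distrib)
  moreover have "(\<Sum>i\<in>S. m i * ln (m i / c i) - m i * ln (1 / CC)) =
      (\<Sum>i\<in>S. m i * ln (m i / c i)) + ln CC"
  proof -
    have "(\<Sum>i\<in>S. m i * ln (m i / c i) - m i * ln (1 / CC)) =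
      (\<Sum>i\<in>S. m i * ln (m i / c i)) - (\<Sum>i\<in>S. m i) * ln (1 / CC)"
      by (simp add: sum_subtractf sum_distrib_right)
    also have "\<dots> = (\<Sum>i\<in>S. m i * ln (m i / c i)) + ln CC"
      using C msum CC_def by (simp add: ln_div)
    finally show ?thesis .
  qed
  ultimately show ?thesis unfolding CC_def by simp
qed

lemma tangent_powr:
  fixes z0 z1 p :: real
  assumes "0 \<le> z0" "0 \<le> z1" "1 < p"
  shows "z1 powr p + p * z1 powr (p - 1) * (z0 - z1) \<le> z0 powr p"
proof (cases "z1 = 0")
  case True then show ?thesis using assms by simp
next
  case False
  then have z1: "z1 > 0" using assms by simp
  show ?thesis
  proof (cases "z0 = 0")
    case True
    have "z1 powr (p - 1) * z1 = z1 powr p" using z1 by (simp add: powr_diff)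
    then show ?thesis using True assms z1 by (simp add: algebra_simps)
  next
    case False
    then have z0: "z0 > 0" using assms by simp
    have "(z1 powr p) powr ((p - 1) / p) * (z0 powr p) powr (1 / p)
        \<le> ((p - 1) / p) * z1 powr p + (1 / p) * z0 powr p"
      by (rule Youngs_inequality_0) (use assms z0 z1 in \<open>auto simp: field_simps\<close>)
    moreover have "(z1 powr p) powr ((p - 1) / p) = z1 powr (p - 1)" using assms by (simp add: powr_powr)
    moreover have "(z0 powr p) powr (1 / p) = z0" using assms z0 by (simp add: powr_powr)
    ultimately have "z1 powr (p - 1) * z0 \<le> ((p - 1) / p) * z1 powr p + (1 / p) * z0 powr p" by simp
    then have "p * (z1 powr (p - 1) * z0) \<le> p * (((p - 1) / p) * z1 powr p + (1 / p) * z0 powr p)"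
      using assms by (intro mult_left_mono) auto
    moreover have "p * (((p - 1) / p) * z1 powr p + (1 / p) * z0 powr p) = (p - 1) * z1 powr p + z0 powr p"
      using assms by (simp add: field_simps)
    moreover have "z1 powr (p - 1) * z1 = z1 powr p" using z1 by (simp add: powr_diff)
    ultimately show ?thesis by (simp add: algebra_simps)
  qed
qed

lemma holder_like:
  fixes q \<alpha> :: "'i \<Rightarrow> real" and \<rho> :: real
  assumes fin: "finite S" and q0: "\<And>i. i \<in> S \<Longrightarrow> 0 \<le> q i" and qs: "(\<Sum>i\<in>S. q i) = 1"
    and a0: "\<And>i. i \<in> S \<Longrightarrow> 0 \<le> \<alpha> i" and r: "0 \<le> \<rho>"
  shows "(\<Sum>i\<in>S. q i powr (\<rho> / (1 + \<rho>)) * \<alpha> i) \<le> (\<Sum>i\<in>S. \<alpha> i powr (1 + \<rho>)) powr (1 / (1 + \<rho>))"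
proof (cases "\<rho> = 0")
  case True
  have "(\<Sum>i\<in>S. q i powr 0 * \<alpha> i) \<le> (\<Sum>i\<in>S. \<alpha> i)"
    proof (intro sum_mono)
    fix i assume "i \<in> S"
    then show "q i powr 0 * \<alpha> i \<le> \<alpha> i" using a0 by (cases "q i = 0") auto
  qed
  moreover have "(\<Sum>i\<in>S. \<alpha> i powr 1) = (\<Sum>i\<in>S. \<alpha> i)" using a0 by simp
  moreover have "(\<Sum>i\<in>S. \<alpha> i) \<ge> 0" using a0 by (simp add: sum_nonneg)
  ultimately show ?thesis using True by simp
next
  case False
  then have r: "\<rho> > 0" using r by simp
  define SS where "SS = (\<Sum>i\<in>S. \<alpha> i powr (1 + \<rho>))"
  define b where "b = \<rho> / (1 + \<rho>)"
  have b: "0 < b" "b < 1" using r by (auto simp: b_def field_simps)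
  show ?thesis
  proof (cases "SS = 0")
    case True
    then have "\<And>i. i \<in> S \<Longrightarrow> \<alpha> i powr (1 + \<rho>) = 0"
      using sum_nonneg_eq_0_iff[OF fin, of "\<lambda>i. \<alpha> i powr (1 + \<rho>)"] unfolding SS_def by auto
    then have "\<And>i. i \<in> S \<Longrightarrow> \<alpha> i = 0" by simp
    then show ?thesis by simp
  next
    case False
    moreover have "SS \<ge> 0" unfolding SS_def by (intro sum_nonneg) auto
    ultimately have SS: "SS > 0" by simp
    have "\<And>i. i \<in> S \<Longrightarrow> q i powr b * (\<alpha> i powr (1 + \<rho>) / SS) powr (1 - b) \<le> b * q i + (1 - b) * (\<alpha> i powr (1 + \<rho>) / SS)"
    proof -
      fix i assume i: "i \<in> S"
      show "q i powr b * (\<alpha> i powr (1 + \<rho>) / SS) powr (1 - b) \<le> b * q i + (1 - b) * (\<alpha> i powr (1 + \<rho>) / SS)"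
      proof (cases "q i = 0 \<or> \<alpha> i = 0")
        case True
        then have "q i powr b * (\<alpha> i powr (1 + \<rho>) / SS) powr (1 - b) = 0" using b by auto
        moreover have "0 \<le> b * q i + (1 - b) * (\<alpha> i powr (1 + \<rho>) / SS)"
          using b q0[OF i] SS by (intro add_nonneg_nonneg mult_nonneg_nonneg divide_nonneg_pos) auto
        ultimately show ?thesis by linarith
      next
        case False
        then show ?thesis using b q0[OF i] a0[OF i] SS by (intro Youngs_inequality_0) auto
      qed
    qed
    then have "(\<Sum>i\<in>S. q i powr b * (\<alpha> i powr (1 + \<rho>) / SS) powr (1 - b)) \<le> (\<Sum>i\<in>S. b * q i + (1 - b) * (\<alpha> i powr (1 + \<rho>) / SS))"
      by (rule sum_mono)
    also have "\<dots> = 1" using SS qs by (simp add: sum.distrib SS_def flip: sum_distrib_left sum_divide_distrib)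
    finally have *: "(\<Sum>i\<in>S. q i powr b * (\<alpha> i powr (1 + \<rho>) / SS) powr (1 - b)) \<le> 1" .
    have e: "\<And>i. i \<in> S \<Longrightarrow> (\<alpha> i powr (1 + \<rho>) / SS) powr (1 - b) = \<alpha> i / SS powr (1 / (1 + \<rho>))"
    proof -
      fix i assume i: "i \<in> S"
      have "(1 + \<rho>) * (1 - b) = 1" using r by (simp add: b_def field_simps)
      moreover have "1 - b = 1 / (1 + \<rho>)" using r by (simp add: b_def field_simps)
      ultimately show "(\<alpha> i powr (1 + \<rho>) / SS) powr (1 - b) = \<alpha> i / SS powr (1 / (1 + \<rho>))"
        using a0[OF i] SS by (simp add: powr_divide powr_powr)
    qed
    have "(\<Sum>i\<in>S. q i powr b * (\<alpha> i powr (1 + \<rho>) / SS) powr (1 - b)) = (\<Sum>i\<in>S. q i powr b * \<alpha> i) / SS powr (1 / (1 + \<rho>))"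
      by (simp add: e sum_divide_distrib)
    with * have "(\<Sum>i\<in>S. q i powr b * \<alpha> i) / SS powr (1 / (1 + \<rho>)) \<le> 1" by simp
    then show ?thesis using SS by (simp add: SS_def b_def divide_le_eq)
  qed
qed

definition dd :: "('a::finite \<Rightarrow> real) \<Rightarrow> ('a \<Rightarrow> 'b::finite \<Rightarrow> real) \<Rightarrow> ('a \<Rightarrow> 'b \<Rightarrow> real) \<Rightarrow> real" where
  "dd P U W = (\<Sum>x\<in>UNIV. \<Sum>y\<in>UNIV. P x * U x y * ln (U x y / W x y))"
definition ii :: "('a::finite \<Rightarrow> real) \<Rightarrow> ('a \<Rightarrow> 'b::finite \<Rightarrow> real) \<Rightarrow> real" where
  "ii P U = (\<Sum>x\<in>UNIV. \<Sum>y\<in>UNIV. P x * U x y * ln (U x y / out_marg P U y))"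
definition bb :: "('a::finite \<Rightarrow> real) \<Rightarrow> ('a \<Rightarrow> 'b::finite \<Rightarrow> real) \<Rightarrow> ('a \<Rightarrow> 'b \<Rightarrow> real) \<Rightarrow> real" where
  "bb P U W = (\<Sum>x\<in>UNIV. \<Sum>y\<in>UNIV. P x * U x y * (- ln (W x y)))"
definition good :: "('a::finite \<Rightarrow> real) \<Rightarrow> ('a \<Rightarrow> 'b::finite \<Rightarrow> real) \<Rightarrow> ('a \<Rightarrow> 'b \<Rightarrow> real) \<Rightarrow> bool" where
  "good P U W \<longleftrightarrow> (\<forall>x y. 0 < P x * U x y \<longrightarrow> W x y \<noteq> 0)"

lemma if_mult_eq: "(if (a::real) = 0 then 0 else a * t) = a * t" by simp

lemma cond_div_good: "good P U W \<Longrightarrow> cond_div P U W = ereal (dd P U W)"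
  unfolding cond_div_def dd_def good_def if_mult_eq by auto

lemma cond_div_bad: "\<not> good P U W \<Longrightarrow> cond_div P U W = \<infinity>"
  unfolding cond_div_def good_def by auto

lemma B_good: "good P U W \<Longrightarrow> B_PU P U W = ereal (bb P U W)"
  unfolding B_PU_def bb_def good_def if_mult_eq by auto

lemma mut_info_ii: "mut_info P U = ii P U"
  unfolding mut_info_def ii_def if_mult_eq ..

lemma dist_nonneg: "is_dist P \<Longrightarrow> 0 \<le> P x" by (simp add: is_dist_def)
lemma dist_sum: "is_dist P \<Longrightarrow> (\<Sum>x\<in>UNIV. P x) = 1" by (simp add: is_dist_def)
lemma ch_nonneg: "is_channel U \<Longrightarrow> 0 \<le> U x y" by (simp add: is_channel_def is_dist_def)
lemma ch_sum: "is_channel U \<Longrightarrow> (\<Sum>y\<in>UNIV. U x y) = 1" by (simp add: is_channel_def is_dist_def)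

lemma om_nonneg: "is_dist P \<Longrightarrow> is_channel U \<Longrightarrow> 0 \<le> out_marg P U y"
  unfolding out_marg_def by (intro sum_nonneg mult_nonneg_nonneg dist_nonneg ch_nonneg)

lemma om_ge: "is_dist P \<Longrightarrow> is_channel U \<Longrightarrow> P x * U x y \<le> out_marg P U y"
  unfolding out_marg_def
  by (rule member_le_sum[of x UNIV "\<lambda>x. P x * U x y"]) (auto intro: mult_nonneg_nonneg dist_nonneg ch_nonneg)

lemma om_sum: "is_dist P \<Longrightarrow> is_channel U \<Longrightarrow> (\<Sum>y\<in>UNIV. out_marg P U y) = 1"
  unfolding out_marg_def
  by (subst sum.swap) (simp add: ch_sum dist_sum flip: sum_distrib_left)

lemma PU_sum: "is_dist P \<Longrightarrow> is_channel U \<Longrightarrow> (\<Sum>x\<in>UNIV. \<Sum>y\<in>UNIV. P x * U x y) = 1"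
  by (simp add: ch_sum dist_sum flip: sum_distrib_left)

lemma double_sum_pair: "(\<Sum>x\<in>UNIV. \<Sum>y\<in>UNIV. f x y) = (\<Sum>z\<in>(UNIV::('a::finite \<times> 'b::finite) set). f (fst z) (snd z))"
  by (simp add: sum.cartesian_product split_def flip: UNIV_Times_UNIV)

lemma core:
  fixes W :: "'a::finite \<Rightarrow> 'b::finite \<Rightarrow> real"
  assumes W: "is_channel W" and P: "is_dist P" and U: "is_channel U" and g: "good P U W"
    and eta: "0 \<le> \<eta>" "\<eta> \<le> \<rho>"
  shows "E_0 W \<rho> \<eta> P \<le> dd P U W + \<rho> * ii P U + \<eta> * bb P U W"
proof -
  define q where "q = out_marg P U"
  define a where "a = (1 + \<eta>) / (1 + \<rho>)"
  define b where "b = \<rho> / (1 + \<rho>)"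
  have rho: "0 \<le> \<rho>" using eta by simp
  have ra: "(1 + \<rho>) * a = 1 + \<eta>" using rho by (simp add: a_def)
  have rb: "(1 + \<rho>) * b = \<rho>" using rho by (simp add: b_def)
  define m where "m = (\<lambda>z::'a \<times> 'b. P (fst z) * U (fst z) (snd z))"
  define c where "c = (\<lambda>z::'a \<times> 'b. P (fst z) * W (fst z) (snd z) powr a * q (snd z) powr b)"
  have P0: "\<And>x. 0 \<le> P x" using P by (rule dist_nonneg)
  have U0: "\<And>x y. 0 \<le> U x y" using U by (rule ch_nonneg)
  have W0: "\<And>x y. 0 \<le> W x y" using W by (rule ch_nonneg)
  have q0: "\<And>y. 0 \<le> q y" unfolding q_def using P U by (rule om_nonneg)
  have qge: "\<And>x y. P x * U x y \<le> q y" unfolding q_def using P U by (rule om_ge)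
  have m0: "\<And>z. 0 \<le> m z" unfolding m_def using P0 U0 by simp
  have c0: "\<And>z. 0 \<le> c z" unfolding c_def using P0 by simp
  have pos: "0 < W x y \<and> 0 < q y \<and> 0 < P x \<and> 0 < U x y" if "0 < P x * U x y" for x y
  proof -
    have "W x y \<noteq> 0" using g that by (simp add: good_def)
    moreover have "0 < P x" "0 < U x y" using that P0 U0
      by (metis less_eq_real_def mult_not_zero)+
    moreover have "0 < q y" using that qge[of x y] by linarith
    ultimately show ?thesis using W0[of x y] by auto
  qed
  have mc: "m z = 0" if "c z = 0" for z
  proof (rule ccontr)
    assume "m z \<noteq> 0"
    then have "0 < m z" using m0[of z] by linarith
    then have "0 < c z" using pos[of "fst z" "snd z"] unfolding m_def c_def by simp
    then show False using that by simp
  qed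
  have msum: "(\<Sum>z\<in>UNIV. m z) = 1" using PU_sum[OF P U] by (simp add: m_def double_sum_pair)
  obtain z0 where z0: "0 < m z0"
  proof -
    have "\<exists>z. 0 < m z"
    proof (rule ccontr)
      assume "\<not> (\<exists>z. 0 < m z)"
      then have "\<And>z. m z = 0" using m0 by (metis less_eq_real_def)
      then show False using msum by simp
    qed
    then show ?thesis using that by blast
  qed
  have cz0: "0 < c z0" using z0 mc[of z0] c0[of z0] by (cases "c z0 = 0") auto
  have Cpos: "0 < (\<Sum>z\<in>UNIV. c z)"
    by (rule sum_pos2[of UNIV z0]) (use cz0 c0 in auto)
  have ls: "- ln (\<Sum>z\<in>UNIV. c z) \<le> (\<Sum>z\<in>UNIV. m z * ln (m z / c z))"
    by (rule LS) (use m0 c0 mc msum Cpos in auto)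
  have trm: "P x * U x y * ln (U x y / W x y) + \<rho> * (P x * U x y * ln (U x y / q y)) + \<eta> * (P x * U x y * (- ln (W x y)))
      = (1 + \<rho>) * (m (x, y) * ln (m (x, y) / c (x, y)))" for x y
  proof (cases "0 < P x * U x y")
    case False
    moreover have "0 \<le> P x * U x y" using P0 U0 by simp
    ultimately have z: "P x * U x y = 0" by linarith
    show ?thesis unfolding m_def fst_conv snd_conv by (simp only: z)
  next
    case True
    note p = pos[OF True]
    have l: "ln (m (x, y) / c (x, y)) = ln (U x y) - a * ln (W x y) - b * ln (q y)"
      using p by (simp add: m_def c_def ln_div ln_mult)
    have "(1 + \<rho>) * (m (x, y) * ln (m (x, y) / c (x, y)))
        = m (x, y) * ((1 + \<rho>) * ln (U x y) - ((1 + \<rho>) * a) * ln (W x y) - ((1 + \<rho>) * b) * ln (q y))"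
      by (simp add: l algebra_simps)
    also have "\<dots> = m (x, y) * ((1 + \<rho>) * ln (U x y) - (1 + \<eta>) * ln (W x y) - \<rho> * ln (q y))"
      by (simp add: ra rb)
    finally show ?thesis using p by (simp add: m_def ln_div algebra_simps)
  qed
  have lhs: "dd P U W + \<rho> * ii P U + \<eta> * bb P U W = (1 + \<rho>) * (\<Sum>z\<in>UNIV. m z * ln (m z / c z))"
  proof -
    have "dd P U W + \<rho> * ii P U + \<eta> * bb P U W = (\<Sum>x\<in>UNIV. \<Sum>y\<in>UNIV.
        P x * U x y * ln (U x y / W x y) + \<rho> * (P x * U x y * ln (U x y / q y)) + \<eta> * (P x * U x y * (- ln (W x y))))"
      unfolding dd_def ii_def bb_def q_def by (simp only: sum.distrib sum_distrib_left)
    also have "\<dots> = (\<Sum>x\<in>UNIV. \<Sum>y\<in>UNIV. (1 + \<rho>) * (m (x, y) * ln (m (x, y) / c (x, y))))"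
      by (simp only: trm)
    also have "\<dots> = (1 + \<rho>) * (\<Sum>z\<in>UNIV. m z * ln (m z / c z))"
      by (simp add: double_sum_pair sum_distrib_left)
    finally show ?thesis .
  qed
  define \<alpha> where "\<alpha> = (\<lambda>y. \<Sum>x\<in>UNIV. P x * W x y powr a)"
  define SS where "SS = (\<Sum>y\<in>UNIV. \<alpha> y powr (1 + \<rho>))"
  have E0: "E_0 W \<rho> \<eta> P = - ln SS" by (simp add: E_0_def SS_def \<alpha>_def a_def)
  have Ceq: "(\<Sum>z\<in>UNIV. c z) = (\<Sum>y\<in>UNIV. q y powr b * \<alpha> y)"
  proof -
    have "(\<Sum>z\<in>UNIV. c z) = (\<Sum>x\<in>UNIV. \<Sum>y\<in>UNIV. P x * W x y powr a * q y powr b)"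
      by (simp add: double_sum_pair c_def)
    also have "\<dots> = (\<Sum>y\<in>UNIV. \<Sum>x\<in>UNIV. q y powr b * (P x * W x y powr a))"
      by (subst sum.swap) (simp add: algebra_simps)
    also have "\<dots> = (\<Sum>y\<in>UNIV. q y powr b * \<alpha> y)" by (simp add: \<alpha>_def sum_distrib_left)
    finally show ?thesis .
  qed
  have hold: "(\<Sum>y\<in>UNIV. q y powr b * \<alpha> y) \<le> SS powr (1 / (1 + \<rho>))"
    unfolding SS_def b_def
    by (rule holder_like) (use q0 om_sum[OF P U] rho P0 in \<open>auto simp: q_def \<alpha>_def intro!: sum_nonneg\<close>)
  have SSpos: "0 < SS"
  proof -
    have "SS \<noteq> 0" using hold Cpos Ceq by auto
    moreover have "0 \<le> SS" unfolding SS_def by (intro sum_nonneg) auto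
    ultimately show ?thesis by simp
  qed
  have "ln (\<Sum>z\<in>UNIV. c z) \<le> ln (SS powr (1 / (1 + \<rho>)))"
    using Cpos Ceq hold SSpos by (subst ln_le_cancel_iff) auto
  also have "\<dots> = ln SS / (1 + \<rho>)" using SSpos by (simp add: ln_powr)
  finally have "(1 + \<rho>) * ln (\<Sum>z\<in>UNIV. c z) \<le> ln SS" using rho by (simp add: field_simps)
  then have "- ln SS \<le> (1 + \<rho>) * (- ln (\<Sum>z\<in>UNIV. c z))" by simp
  also have "\<dots> \<le> (1 + \<rho>) * (\<Sum>z\<in>UNIV. m z * ln (m z / c z))"
    using ls rho by (intro mult_left_mono) auto
  finally show ?thesis using E0 lhs by simp
qed

lemma compact_PiE_UNIV: "(\<And>i. compact (S i)) \<Longrightarrow> compact (PiE UNIV S)"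
  using compactin_PiE[of "\<lambda>i. euclidean" UNIV S] by (simp add: euclidean_product_topology)

lemma simplex_sub: "{P::'a::finite \<Rightarrow> real. is_dist P} \<subseteq> PiE UNIV (\<lambda>_. {0..1})"
proof
  fix P :: "'a \<Rightarrow> real" assume "P \<in> {P. is_dist P}"
  then have P: "is_dist P" by simp
  have "P x \<le> 1" for x
    using member_le_sum[of x UNIV P] dist_nonneg[OF P] dist_sum[OF P] by simp
  then show "P \<in> PiE UNIV (\<lambda>_. {0..1})" using dist_nonneg[OF P] by auto
qed

lemma simplex_closed: "closed {P::'a::finite \<Rightarrow> real. is_dist P}"
proof -
  have "{P::'a \<Rightarrow> real. is_dist P} = {P. \<forall>x. 0 \<le> P x} \<inter> {P. (\<Sum>x\<in>UNIV. P x) = 1}"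
    by (auto simp: is_dist_def)
  moreover have "closed {P::'a \<Rightarrow> real. \<forall>x. 0 \<le> P x}"
    by (intro closed_Collect_all closed_Collect_le continuous_on_const continuous_on_product_coordinates)
  moreover have "closed {P::'a \<Rightarrow> real. (\<Sum>x\<in>UNIV. P x) = 1}"
    by (intro closed_Collect_eq continuous_on_const continuous_on_sum continuous_on_product_coordinates)
  ultimately show ?thesis by auto
qed

lemma simplex_compact: "compact {P::'a::finite \<Rightarrow> real. is_dist P}"
proof -
  have "compact (PiE UNIV (\<lambda>_::'a. {0..1::real}))" by (rule compact_PiE_UNIV) simp
  then have "compact (PiE UNIV (\<lambda>_::'a. {0..1::real}) \<inter> {P. is_dist P})"
    using simplex_closed by (rule compact_Int_closed)
  moreover have "PiE UNIV (\<lambda>_::'a. {0..1::real}) \<inter> {P. is_dist P} = {P. is_dist P}"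
    using simplex_sub by auto
  ultimately show ?thesis by simp
qed

lemma exists_dist: "\<exists>P::'a::finite \<Rightarrow> real. is_dist P"
proof -
  obtain x0 :: 'a where True by simp
  show ?thesis by (rule exI[of _ "\<lambda>x. if x = x0 then 1 else 0"]) (simp add: is_dist_def)
qed

lemma exists_min:
  fixes cc :: "'a::finite \<Rightarrow> 'b::finite \<Rightarrow> real"
  assumes cc: "\<And>x y. 0 \<le> cc x y" and p: "0 < p"
  shows "\<exists>Pm. is_dist Pm \<and> (\<forall>P. is_dist P \<longrightarrow>
      (\<Sum>y\<in>UNIV. (\<Sum>x\<in>UNIV. Pm x * cc x y) powr p) \<le> (\<Sum>y\<in>UNIV. (\<Sum>x\<in>UNIV. P x * cc x y) powr p))"
proof -
  have c1: "continuous_on {P. is_dist P} (\<lambda>P. (\<Sum>x\<in>UNIV. P x * cc x y))" for y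
    by (intro continuous_on_sum continuous_on_mult continuous_on_const
        continuous_on_subset[OF continuous_on_product_coordinates]) simp
  have n1: "\<forall>P\<in>{P. is_dist P}. 0 \<le> (\<Sum>x\<in>UNIV. P x * cc x y) \<and> ((\<Sum>x\<in>UNIV. P x * cc x y) = 0 \<longrightarrow> 0 < p)" for y
    using cc p by (auto intro!: sum_nonneg mult_nonneg_nonneg simp: is_dist_def)
  have "continuous_on {P. is_dist P} (\<lambda>P. \<Sum>y\<in>UNIV. (\<Sum>x\<in>UNIV. P x * cc x y) powr p)"
    by (intro continuous_on_sum continuous_on_powr'[OF c1 continuous_on_const n1])
  then obtain Pm where "Pm \<in> {P. is_dist P}" "\<forall>P\<in>{P. is_dist P}.
      (\<Sum>y\<in>UNIV. (\<Sum>x\<in>UNIV. Pm x * cc x y) powr p) \<le> (\<Sum>y\<in>UNIV. (\<Sum>x\<in>UNIV. P x * cc x y) powr p)"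
    using continuous_attains_inf[OF simplex_compact] exists_dist by blast
  then show ?thesis by auto
qed

lemma kkt:
  fixes cc :: "'a::finite \<Rightarrow> 'b::finite \<Rightarrow> real"
  assumes cc: "\<And>x y. 0 \<le> cc x y" and r: "0 < \<rho>" and Pm: "is_dist Pm"
    and min: "\<And>P. is_dist P \<Longrightarrow>
      (\<Sum>y\<in>UNIV. (\<Sum>x\<in>UNIV. Pm x * cc x y) powr (1 + \<rho>)) \<le> (\<Sum>y\<in>UNIV. (\<Sum>x\<in>UNIV. P x * cc x y) powr (1 + \<rho>))"
  shows "(\<Sum>y\<in>UNIV. (\<Sum>x\<in>UNIV. Pm x * cc x y) powr (1 + \<rho>)) \<le> (\<Sum>y\<in>UNIV. cc x0 y * (\<Sum>x\<in>UNIV. Pm x * cc x y) powr \<rho>)"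
proof -
  define \<alpha> where "\<alpha> = (\<lambda>y. \<Sum>x\<in>UNIV. Pm x * cc x y)"
  define \<beta> where "\<beta> = (\<lambda>y. cc x0 y)"
  have a0: "\<And>y. 0 \<le> \<alpha> y" unfolding \<alpha>_def using cc dist_nonneg[OF Pm] by (auto intro!: sum_nonneg)
  have b0: "\<And>y. 0 \<le> \<beta> y" unfolding \<beta>_def using cc by simp
  define \<phi> where "\<phi> = (\<lambda>s. \<Sum>y\<in>UNIV. ((1 - s) * \<alpha> y + s * \<beta> y) powr \<rho> * (\<alpha> y - \<beta> y))"
  have ev: "\<phi> s \<le> 0" if s: "0 < s" "s < 1" for s
  proof -
    define Ps where "Ps = (\<lambda>x. (1 - s) * Pm x + s * (if x = x0 then 1 else 0))"
    have Ps: "is_dist Ps"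
      unfolding is_dist_def Ps_def using s dist_nonneg[OF Pm] dist_sum[OF Pm]
      by (auto simp: sum.distrib simp flip: sum_distrib_left)
    have as: "(\<Sum>x\<in>UNIV. Ps x * cc x y) = (1 - s) * \<alpha> y + s * \<beta> y" for y
    proof -
      have "(\<Sum>x\<in>UNIV. Ps x * cc x y) = (\<Sum>x\<in>UNIV. (1 - s) * (Pm x * cc x y)) + (\<Sum>x\<in>UNIV. s * ((if x = x0 then 1 else 0) * cc x y))"
        by (simp only: Ps_def distrib_right mult.assoc sum.distrib)
      also have "\<dots> = (1 - s) * \<alpha> y + s * \<beta> y"
      proof -
        have "(\<Sum>x\<in>UNIV. (if x = x0 then 1 else 0) * cc x y) = (\<Sum>x\<in>UNIV. (if x = x0 then cc x y else 0))"
          by (intro sum.cong) auto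
        also have "\<dots> = cc x0 y" by simp
        finally show ?thesis by (simp add: \<alpha>_def \<beta>_def flip: sum_distrib_left)
      qed
      finally show ?thesis .
    qed
    define as' where "as' = (\<lambda>y. (1 - s) * \<alpha> y + s * \<beta> y)"
    have as0: "0 \<le> as' y" for y unfolding as'_def using s a0 b0 by (auto intro!: add_nonneg_nonneg)
    have tan: "as' y powr (1 + \<rho>) + (1 + \<rho>) * as' y powr \<rho> * (\<alpha> y - as' y) \<le> \<alpha> y powr (1 + \<rho>)" for y
      using tangent_powr[of "\<alpha> y" "as' y" "1 + \<rho>"] a0 as0 r by simp
    have d: "\<alpha> y - as' y = s * (\<alpha> y - \<beta> y)" for y unfolding as'_def by (simp add: algebra_simps)
    have "(\<Sum>y\<in>UNIV. as' y powr (1 + \<rho>)) + (1 + \<rho>) * s * \<phi> s \<le> (\<Sum>y\<in>UNIV. \<alpha> y powr (1 + \<rho>))"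
    proof -
      have "(\<Sum>y\<in>UNIV. as' y powr (1 + \<rho>) + (1 + \<rho>) * as' y powr \<rho> * (\<alpha> y - as' y)) \<le> (\<Sum>y\<in>UNIV. \<alpha> y powr (1 + \<rho>))"
        by (rule sum_mono) (rule tan)
      moreover have "(\<Sum>y\<in>UNIV. as' y powr (1 + \<rho>) + (1 + \<rho>) * as' y powr \<rho> * (\<alpha> y - as' y))
          = (\<Sum>y\<in>UNIV. as' y powr (1 + \<rho>)) + (1 + \<rho>) * s * \<phi> s"
      proof -
        have \<phi>': "\<phi> s = (\<Sum>y\<in>UNIV. as' y powr \<rho> * (\<alpha> y - \<beta> y))" unfolding \<phi>_def as'_def ..
        show ?thesis unfolding \<phi>' d sum.distrib by (simp add: sum_distrib_left mult_ac)
      qed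
      ultimately show ?thesis by simp
    qed
    moreover have "(\<Sum>y\<in>UNIV. \<alpha> y powr (1 + \<rho>)) \<le> (\<Sum>y\<in>UNIV. as' y powr (1 + \<rho>))"
      using min[OF Ps] by (simp add: as as'_def \<alpha>_def)
    ultimately have "(1 + \<rho>) * s * \<phi> s \<le> 0" by simp
    then show ?thesis using r s by (simp add: mult_le_0_iff)
  qed
  have py: "((\<lambda>s. ((1 - s) * \<alpha> y + s * \<beta> y) powr \<rho>) \<longlongrightarrow> \<alpha> y powr \<rho>) (at_right 0)" for y
  proof -
    have "((\<lambda>s. (1 - s) * \<alpha> y + s * \<beta> y) \<longlongrightarrow> (1 - 0) * \<alpha> y + 0 * \<beta> y) (at_right 0)"
      by (intro tendsto_intros tendsto_within_subset[OF tendsto_ident_at]) auto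
    then have t: "((\<lambda>s. (1 - s) * \<alpha> y + s * \<beta> y) \<longlongrightarrow> \<alpha> y) (at_right 0)" by simp
    have e: "eventually (\<lambda>s. 0 \<le> (1 - s) * \<alpha> y + s * \<beta> y) (at_right 0)"
      by (rule eventually_mono[OF eventually_at_right_real[of 0 "1::real"]]) (use a0 b0 in \<open>auto intro!: add_nonneg_nonneg\<close>)
    show ?thesis
      by (rule tendsto_powr'[OF t tendsto_const]) (use r e in auto)
  qed
  have lim: "(\<phi> \<longlongrightarrow> (\<Sum>y\<in>UNIV. \<alpha> y powr \<rho> * (\<alpha> y - \<beta> y))) (at_right 0)"
    unfolding \<phi>_def by (intro tendsto_sum tendsto_mult py tendsto_const)
  have "(\<Sum>y\<in>UNIV. \<alpha> y powr \<rho> * (\<alpha> y - \<beta> y)) \<le> 0"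
  proof (rule tendsto_le[OF _ tendsto_const lim])
    show "eventually (\<lambda>s. \<phi> s \<le> 0) (at_right 0)"
      by (rule eventually_mono[OF eventually_at_right_real[of 0 "1::real"]]) (auto intro: ev)
  qed simp
  moreover have "\<alpha> y powr \<rho> * \<alpha> y = \<alpha> y powr (1 + \<rho>)" for y
    using a0[of y] by (simp add: powr_add)
  ultimately have "(\<Sum>y\<in>UNIV. \<alpha> y powr (1 + \<rho>)) \<le> (\<Sum>y\<in>UNIV. \<beta> y * \<alpha> y powr \<rho>)"
    by (simp add: algebra_simps sum_subtractf)
  then show ?thesis by (simp add: \<alpha>_def \<beta>_def)
qed

lemma PU_zero:
  assumes P: "is_dist P" and U: "is_channel U" and "\<not> 0 < P x * U x y"
  shows "P x * U x y = 0"
proof -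
  have "0 \<le> P x * U x y" using dist_nonneg[OF P] ch_nonneg[OF U] by simp
  then show ?thesis using assms(3) by linarith
qed

lemma PU_pos:
  assumes P: "is_dist P" and U: "is_channel U" and "0 < P x * U x y"
  shows "0 < P x" "0 < U x y"
proof -
  have "P x \<noteq> 0" "U x y \<noteq> 0" using assms(3) by auto
  then show "0 < P x" "0 < U x y" using dist_nonneg[OF P, of x] ch_nonneg[OF U, of x y] by auto
qed

lemma om_pos_ex:
  assumes P: "is_dist P" and U: "is_channel U" and "0 < out_marg P U y"
  shows "\<exists>x. 0 < P x * U x y"
proof (rule ccontr)
  assume "\<not> (\<exists>x. 0 < P x * U x y)"
  then have z: "\<And>x. P x * U x y = 0" using PU_zero[OF P U] by blast
  have "out_marg P U y = 0" unfolding out_marg_def by (simp only: z sum.neutral_const)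
  then show False using assms(3) by simp
qed

lemma I_le:
  assumes P: "is_dist P" and U: "is_channel U" and Q0: "\<And>y. 0 \<le> Q y" and Qs: "(\<Sum>y\<in>UNIV. Q y) = 1"
    and QP: "\<And>x y. 0 < P x * U x y \<Longrightarrow> 0 < Q y"
  shows "ii P U \<le> (\<Sum>x\<in>UNIV. \<Sum>y\<in>UNIV. P x * U x y * ln (U x y / Q y))"
proof -
  define q where "q = out_marg P U"
  have trm: "P x * U x y * ln (U x y / Q y) - P x * U x y * ln (U x y / q y) = P x * U x y * ln (q y / Q y)" for x y
  proof (cases "0 < P x * U x y")
    case True
    have "0 < U x y" using PU_pos[OF P U True] by simp
    moreover have "0 < q y" using om_ge[OF P U, of x y] True q_def by simp
    moreover have "0 < Q y" using QP[OF True] .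
    ultimately show ?thesis by (simp add: ln_div algebra_simps)
  next
    case False
    then show ?thesis by (simp only: PU_zero[OF P U False] mult_zero_left diff_self)
  qed
  have "(\<Sum>x\<in>UNIV. \<Sum>y\<in>UNIV. P x * U x y * ln (U x y / Q y)) - ii P U
      = (\<Sum>x\<in>UNIV. \<Sum>y\<in>UNIV. P x * U x y * ln (q y / Q y))"
    unfolding ii_def q_def[symmetric] by (simp only: trm flip: sum_subtractf)
  also have "\<dots> = (\<Sum>y\<in>UNIV. q y * ln (q y / Q y))"
    by (subst sum.swap) (simp add: q_def out_marg_def sum_distrib_right)
  also have "\<dots> \<ge> - ln (\<Sum>y\<in>UNIV. Q y)"
  proof (rule LS)
    show "\<And>y. y \<in> UNIV \<Longrightarrow> 0 \<le> q y" using om_nonneg[OF P U] q_def by simp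
    show "\<And>y. y \<in> UNIV \<Longrightarrow> 0 \<le> Q y" using Q0 by simp
    show "\<And>y. y \<in> UNIV \<Longrightarrow> Q y = 0 \<Longrightarrow> q y = 0"
    proof (rule ccontr)
      fix y assume "Q y = 0" "q y \<noteq> 0"
      then have "0 < q y" using om_nonneg[OF P U, of y] q_def by simp
      then obtain x where "0 < P x * U x y" using om_pos_ex[OF P U] q_def by blast
      then show False using QP \<open>Q y = 0\<close> by fastforce
    qed
    show "(\<Sum>y\<in>UNIV. q y) = 1" using om_sum[OF P U] q_def by simp
    show "0 < (\<Sum>y\<in>UNIV. Q y)" using Qs by simp
  qed simp
  finally show ?thesis using Qs by simp
qed

lemma sumPW: "is_dist P \<Longrightarrow> is_channel W \<Longrightarrow> (\<Sum>y\<in>UNIV. \<Sum>x\<in>UNIV. P x * W x y) = 1"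
  by (subst sum.swap) (rule PU_sum)

lemma E0_zero: "is_dist P \<Longrightarrow> is_channel W \<Longrightarrow> E_0 W 0 0 P = 0"
proof -
  assume P: "is_dist P" and W: "is_channel W"
  have e1: "1 + 0 = (1::real)" "(1::real) / 1 = 1" by simp_all
  have e2: "\<And>x y. W x y powr 1 = W x y" using ch_nonneg[OF W] by simp
  have e3: "\<And>y. (\<Sum>x\<in>UNIV. P x * W x y) powr 1 = (\<Sum>x\<in>UNIV. P x * W x y)"
    using dist_nonneg[OF P] ch_nonneg[OF W] by (simp add: sum_nonneg)
  show ?thesis unfolding E_0_def e1 e2 e3 sumPW[OF P W] ln_one by simp
qed

lemma dd_self: "dd P W W = 0"
  unfolding dd_def by (intro sum.neutral ballI) (simp add: divide_self_if)

lemma pieceB: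
  fixes W :: "'a::finite \<Rightarrow> 'b::finite \<Rightarrow> real"
  assumes W: "is_channel W" and P0: "is_dist P0" and eta: "0 \<le> \<eta>" "\<eta> \<le> \<rho>"
  shows "\<exists>P' U. is_dist P' \<and> is_channel U \<and> good P0 U W \<and>
     dd P0 U W + \<rho> * ii P0 U + \<eta> * bb P0 U W \<le> E_0 W \<rho> \<eta> P'"
proof (cases "\<rho> = 0")
  case True
  then have "\<eta> = 0" using eta by simp
  moreover have "good P0 W W" by (auto simp: good_def)
  ultimately show ?thesis using True W P0 E0_zero[OF P0 W] dd_self[of P0 W]
    by (intro exI[of _ P0] exI[of _ W]) simp
next
  case False
  then have r: "0 < \<rho>" using eta by simp
  define a where "a = (1 + \<eta>) / (1 + \<rho>)"
  have a: "0 < a" using eta r by (simp add: a_def)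
  have ra: "(1 + \<rho>) * a = 1 + \<eta>" using r by (simp add: a_def)
  define cc where "cc = (\<lambda>x y. W x y powr a)"
  have cc0: "\<And>x y. 0 \<le> cc x y" by (simp add: cc_def)
  obtain Pm where Pm: "is_dist Pm" and min: "\<And>P. is_dist P \<Longrightarrow>
      (\<Sum>y\<in>UNIV. (\<Sum>x\<in>UNIV. Pm x * cc x y) powr (1 + \<rho>)) \<le> (\<Sum>y\<in>UNIV. (\<Sum>x\<in>UNIV. P x * cc x y) powr (1 + \<rho>))"
  proof -
    have "\<exists>Pm. is_dist Pm \<and> (\<forall>P. is_dist P \<longrightarrow>
      (\<Sum>y\<in>UNIV. (\<Sum>x\<in>UNIV. Pm x * cc x y) powr (1 + \<rho>)) \<le> (\<Sum>y\<in>UNIV. (\<Sum>x\<in>UNIV. P x * cc x y) powr (1 + \<rho>)))"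
      by (rule exists_min) (use cc0 r in auto)
    then show ?thesis using that by blast
  qed
  define \<alpha> where "\<alpha> = (\<lambda>y. \<Sum>x\<in>UNIV. Pm x * cc x y)"
  define S where "S = (\<Sum>y\<in>UNIV. \<alpha> y powr (1 + \<rho>))"
  define T where "T = (\<lambda>x. \<Sum>y\<in>UNIV. cc x y * \<alpha> y powr \<rho>)"
  have a0: "\<And>y. 0 \<le> \<alpha> y" unfolding \<alpha>_def using cc0 dist_nonneg[OF Pm] by (auto intro!: sum_nonneg)
  have E0: "E_0 W \<rho> \<eta> Pm = - ln S" by (simp add: E_0_def S_def \<alpha>_def cc_def a_def)
  have TS: "S \<le> T x" for x unfolding S_def T_def \<alpha>_def by (rule kkt[OF cc0 r Pm min])
  have Spos: "0 < S"
  proof -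
    obtain x1 where x1: "0 < Pm x1"
    proof -
      have "\<exists>x. 0 < Pm x"
      proof (rule ccontr)
        assume "\<not> (\<exists>x. 0 < Pm x)"
        then have "\<And>x. Pm x = 0" using dist_nonneg[OF Pm] by (metis less_eq_real_def)
        then show False using dist_sum[OF Pm] by simp
      qed
      then show ?thesis using that by blast
    qed
    obtain y1 where y1: "0 < W x1 y1"
    proof -
      have "\<exists>y. 0 < W x1 y"
      proof (rule ccontr)
        assume "\<not> (\<exists>y. 0 < W x1 y)"
        then have "\<And>y. W x1 y = 0" using ch_nonneg[OF W] by (metis less_eq_real_def)
        then show False using ch_sum[OF W, of x1] by simp
      qed
      then show ?thesis using that by blast
    qed
    have "0 < Pm x1 * cc x1 y1" using x1 y1 by (simp add: cc_def)
    also have "\<dots> \<le> \<alpha> y1" unfolding \<alpha>_def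
      by (rule member_le_sum[of x1 UNIV "\<lambda>x. Pm x * cc x y1"]) (use cc0 dist_nonneg[OF Pm] in auto)
    finally have "0 < \<alpha> y1" .
    then have "0 < \<alpha> y1 powr (1 + \<rho>)" by simp
    then show ?thesis unfolding S_def by (intro sum_pos2[of UNIV y1]) auto
  qed
  have Tpos: "0 < T x" for x using TS[of x] Spos by simp
  define U where "U = (\<lambda>x y. cc x y * \<alpha> y powr \<rho> / T x)"
  have U0: "0 \<le> U x y" for x y unfolding U_def using cc0 Tpos[of x] by simp
  have Usum: "(\<Sum>y\<in>UNIV. U x y) = 1" for x
    unfolding U_def using Tpos[of x] by (simp add: T_def flip: sum_divide_distrib)
  have U: "is_channel U" using U0 Usum by (simp add: is_channel_def is_dist_def)
  have Upos: "0 < W x y \<and> 0 < \<alpha> y" if "0 < U x y" for x y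
  proof -
    have "cc x y \<noteq> 0" "\<alpha> y powr \<rho> \<noteq> 0" using that by (auto simp: U_def)
    then show ?thesis using ch_nonneg[OF W, of x y] a0[of y] by (auto simp: cc_def)
  qed
  have g: "good P0 U W" unfolding good_def using Upos PU_pos[OF P0 U] by force
  define Q where "Q = (\<lambda>y. \<alpha> y powr (1 + \<rho>) / S)"
  have Q0: "\<And>y. 0 \<le> Q y" unfolding Q_def using Spos by simp
  have Qs: "(\<Sum>y\<in>UNIV. Q y) = 1" unfolding Q_def using Spos by (simp add: S_def flip: sum_divide_distrib)
  have QP: "0 < Q y" if "0 < P0 x * U x y" for x y
    using Upos[OF PU_pos(2)[OF P0 U that]] Spos by (simp add: Q_def)
  have Ile: "ii P0 U \<le> (\<Sum>x\<in>UNIV. \<Sum>y\<in>UNIV. P0 x * U x y * ln (U x y / Q y))"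
    by (rule I_le[OF P0 U Q0 Qs QP])
  have trm: "P0 x * U x y * ln (U x y / W x y) + \<rho> * (P0 x * U x y * ln (U x y / Q y)) + \<eta> * (P0 x * U x y * (- ln (W x y)))
     = P0 x * U x y * (\<rho> * ln S - (1 + \<rho>) * ln (T x))" for x y
  proof (cases "0 < P0 x * U x y")
    case False
    then show ?thesis by (simp only: PU_zero[OF P0 U False] mult_zero_left mult_zero_right add_0_right)
  next
    case True
    have u: "0 < U x y" using PU_pos[OF P0 U True] by simp
    have w: "0 < W x y" and al: "0 < \<alpha> y" using Upos[OF u] by auto
    have lU: "ln (U x y) = a * ln (W x y) + \<rho> * ln (\<alpha> y) - ln (T x)"
      using w al Tpos[of x] by (simp add: U_def cc_def ln_div ln_mult)
    have lQ: "ln (Q y) = (1 + \<rho>) * ln (\<alpha> y) - ln S"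
      using al Spos by (simp add: Q_def ln_div)
    have "ln (U x y / W x y) + \<rho> * ln (U x y / Q y) + \<eta> * (- ln (W x y))
        = (1 + \<rho>) * ln (U x y) - (1 + \<eta>) * ln (W x y) - \<rho> * ln (Q y)"
      using u w QP[OF True] by (simp add: ln_div algebra_simps)
    also have "\<dots> = ((1 + \<rho>) * a) * ln (W x y) - (1 + \<eta>) * ln (W x y) + \<rho> * ln S - (1 + \<rho>) * ln (T x)"
      unfolding lU lQ by (simp add: algebra_simps)
    also have "\<dots> = \<rho> * ln S - (1 + \<rho>) * ln (T x)" unfolding ra by simp
    finally have L: "ln (U x y / W x y) + \<rho> * ln (U x y / Q y) + \<eta> * (- ln (W x y)) = \<rho> * ln S - (1 + \<rho>) * ln (T x)" .
    have "P0 x * U x y * ln (U x y / W x y) + \<rho> * (P0 x * U x y * ln (U x y / Q y)) + \<eta> * (P0 x * U x y * (- ln (W x y)))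
      = P0 x * U x y * (ln (U x y / W x y) + \<rho> * ln (U x y / Q y) + \<eta> * (- ln (W x y)))"
      by (simp add: algebra_simps)
    then show ?thesis unfolding L .
  qed
  have "dd P0 U W + \<rho> * ii P0 U + \<eta> * bb P0 U W \<le>
      dd P0 U W + \<rho> * (\<Sum>x\<in>UNIV. \<Sum>y\<in>UNIV. P0 x * U x y * ln (U x y / Q y)) + \<eta> * bb P0 U W"
    using Ile r by (simp add: mult_left_mono)
  also have "\<dots> = (\<Sum>x\<in>UNIV. \<Sum>y\<in>UNIV. P0 x * U x y * ln (U x y / W x y) + \<rho> * (P0 x * U x y * ln (U x y / Q y)) + \<eta> * (P0 x * U x y * (- ln (W x y))))"
    unfolding dd_def bb_def by (simp only: sum.distrib sum_distrib_left)
  also have "\<dots> = (\<Sum>x\<in>UNIV. \<Sum>y\<in>UNIV. P0 x * U x y * (\<rho> * ln S - (1 + \<rho>) * ln (T x)))"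
    by (simp only: trm)
  also have "\<dots> = (\<Sum>x\<in>UNIV. P0 x * (\<rho> * ln S - (1 + \<rho>) * ln (T x)))"
    by (simp add: Usum mult.assoc flip: sum_distrib_left sum_distrib_right)
  also have "\<dots> \<le> (\<Sum>x\<in>UNIV. P0 x * (\<rho> * ln S - (1 + \<rho>) * ln S))"
  proof (rule sum_mono)
    fix x
    have "ln S \<le> ln (T x)" using TS[of x] Spos by simp
    then have "\<rho> * ln S - (1 + \<rho>) * ln (T x) \<le> \<rho> * ln S - (1 + \<rho>) * ln S" using r by simp
    then show "P0 x * (\<rho> * ln S - (1 + \<rho>) * ln (T x)) \<le> P0 x * (\<rho> * ln S - (1 + \<rho>) * ln S)"
      by (rule mult_left_mono) (rule dist_nonneg[OF P0])
  qed
  also have "\<dots> = (\<Sum>x\<in>UNIV. P0 x * (- ln S))" by (simp add: algebra_simps)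
  also have "\<dots> = (\<Sum>x\<in>UNIV. P0 x) * (- ln S)" by (rule sum_distrib_right[symmetric])
  also have "\<dots> = - ln S" using dist_sum[OF P0] by simp
  finally show ?thesis using Pm U g E0 by (intro exI[of _ Pm] exI[of _ U]) simp
qed

definition Kset :: "('a::finite \<Rightarrow> real) \<Rightarrow> ('a \<Rightarrow> 'b::finite \<Rightarrow> real) \<Rightarrow> ('a \<Rightarrow> 'b \<Rightarrow> real) set" where
  "Kset P W = {U. is_channel U \<and> good P U W}"

lemma coord1: "continuous_on S (\<lambda>U::'a \<Rightarrow> 'b \<Rightarrow> real. U x)"
  by (rule continuous_on_subset[OF continuous_on_product_coordinates]) simp

lemma coord2: "continuous_on S (\<lambda>U::'a \<Rightarrow> 'b \<Rightarrow> real. U x y)"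
  by (rule continuous_on_product_then_coordinatewise[OF coord1])

lemma Kset_eq:
  fixes P :: "'a::finite \<Rightarrow> real" and W :: "'a \<Rightarrow> 'b::finite \<Rightarrow> real"
  assumes P: "is_dist P"
  shows "Kset P W = {U. \<forall>x y. 0 \<le> U x y \<and> U x y * (if 0 < P x \<and> W x y = 0 then 1 else 0) = 0}
     \<inter> {U. \<forall>x. (\<Sum>y\<in>UNIV. U x y) = 1}"
proof -
  have eq: "good P U W \<longleftrightarrow> (\<forall>x y. U x y * (if 0 < P x \<and> W x y = 0 then 1 else 0) = 0)"
    if U0: "\<forall>x y. 0 \<le> U x y" for U
  proof -
    have "(0 < P x * U x y \<longrightarrow> W x y \<noteq> 0) \<longleftrightarrow> U x y * (if 0 < P x \<and> W x y = 0 then 1 else 0) = 0" for x y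
    proof (cases "0 < P x \<and> W x y = 0")
      case True
      have u: "0 \<le> U x y" using U0 by blast
      have "0 < P x * U x y \<longleftrightarrow> U x y \<noteq> 0"
      proof
        assume "0 < P x * U x y" then show "U x y \<noteq> 0" by auto
      next
        assume "U x y \<noteq> 0" then have "0 < U x y" using u by simp
        then show "0 < P x * U x y" using True by simp
      qed
      then show ?thesis using True by simp
    next
      case False
      have "W x y \<noteq> 0" if "0 < P x * U x y"
      proof -
        have "P x \<noteq> 0" using that by auto
        then have "0 < P x" using dist_nonneg[OF P, of x] by simp
        then show ?thesis using False by simp
      qed
      moreover have "U x y * (if 0 < P x \<and> W x y = 0 then 1 else 0) = 0" using False by (simp only: if_False mult_zero_right)
      ultimately show ?thesis by blast
    qed
    then show ?thesis unfolding good_def by blast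
  qed
  show ?thesis
  proof (intro set_eqI iffI)
    fix U assume "U \<in> Kset P W"
    then have U: "is_channel U" "good P U W" by (simp_all add: Kset_def)
    have U0: "\<forall>x y. 0 \<le> U x y" using ch_nonneg[OF U(1)] by blast
    show "U \<in> {U. \<forall>x y. 0 \<le> U x y \<and> U x y * (if 0 < P x \<and> W x y = 0 then 1 else 0) = 0} \<inter> {U. \<forall>x. (\<Sum>y\<in>UNIV. U x y) = 1}"
      using U0 eq[OF U0] U(2) ch_sum[OF U(1)] by blast
  next
    fix U :: "'a \<Rightarrow> 'b \<Rightarrow> real" assume A: "U \<in> {U. \<forall>x y. 0 \<le> U x y \<and> U x y * (if 0 < P x \<and> W x y = 0 then 1 else 0) = 0} \<inter> {U. \<forall>x. (\<Sum>y\<in>UNIV. U x y) = 1}"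
    then have U0: "\<forall>x y. 0 \<le> U x y" by blast
    have "is_channel U" using A by (simp add: is_channel_def is_dist_def)
    moreover have "good P U W" using eq[OF U0] A by blast
    ultimately show "U \<in> Kset P W" by (simp add: Kset_def)
  qed
qed

lemma Kset_closed: assumes P: "is_dist P" shows "closed (Kset P W)"
  unfolding Kset_eq[OF P]
  by (intro closed_Int closed_Collect_all closed_Collect_conj closed_Collect_le closed_Collect_eq
      continuous_on_const coord2 continuous_on_mult continuous_on_sum)

lemma Kset_compact: assumes P: "is_dist P" shows "compact (Kset P W)"
proof -
  have c: "compact (PiE UNIV (\<lambda>_::'a. PiE UNIV (\<lambda>_::'b. {0..1::real})))"
    by (intro compact_PiE_UNIV) simp
  have "Kset P W \<subseteq> PiE UNIV (\<lambda>_::'a. PiE UNIV (\<lambda>_::'b. {0..1::real}))"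
  proof
    fix U assume "U \<in> Kset P W"
    then have U: "is_channel U" by (simp add: Kset_def)
    have "U x y \<le> 1" for x y
      using member_le_sum[of y UNIV "U x"] ch_nonneg[OF U] ch_sum[OF U, of x] by simp
    then show "U \<in> PiE UNIV (\<lambda>_::'a. PiE UNIV (\<lambda>_::'b. {0..1::real}))"
      using ch_nonneg[OF U] by auto
  qed
  then have "Kset P W = PiE UNIV (\<lambda>_::'a. PiE UNIV (\<lambda>_::'b. {0..1::real})) \<inter> Kset P W" by auto
  then show ?thesis using compact_Int_closed[OF c Kset_closed[OF P, of W]] by simp
qed

lemma W_in_Kset: "is_channel W \<Longrightarrow> W \<in> Kset P W"
  by (auto simp: Kset_def good_def)

lemma cont_g: "continuous_on {0..} (\<lambda>u::real. u * ln (u / w))" if "0 \<le> w"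
proof (cases "w = 0")
  case True then show ?thesis by simp
next
  case False
  then have w: "0 < w" using that by simp
  have "continuous_on {0..} (\<lambda>u::real. u * ln u - u * ln w)"
    by (intro continuous_intros cont_h)
  moreover have "u * ln u - u * ln w = u * ln (u / w)" if "u \<in> {0..}" for u
    using that w by (cases "u = 0") (auto simp: ln_div algebra_simps)
  ultimately show ?thesis by (rule continuous_on_eq)
qed

lemma cont_comp_nonneg:
  fixes f :: "real \<Rightarrow> real" and g :: "('a \<Rightarrow> 'b \<Rightarrow> real) \<Rightarrow> real"
  assumes "continuous_on {0..} f" "continuous_on S g" "\<And>U. U \<in> S \<Longrightarrow> 0 \<le> g U"
  shows "continuous_on S (\<lambda>U. f (g U))"
  by (rule continuous_on_compose2[OF assms(1) assms(2)]) (use assms(3) in auto)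

lemma ii_alt:
  assumes P: "is_dist P" and U: "is_channel U"
  shows "ii P U = (\<Sum>x\<in>UNIV. \<Sum>y\<in>UNIV. P x * (U x y * ln (U x y))) - (\<Sum>y\<in>UNIV. out_marg P U y * ln (out_marg P U y))"
proof -
  define q where "q = out_marg P U"
  have trm: "P x * U x y * ln (U x y / q y) = P x * (U x y * ln (U x y)) - P x * U x y * ln (q y)" for x y
  proof (cases "0 < P x * U x y")
    case True
    have "0 < U x y" using PU_pos[OF P U True] by simp
    moreover have "0 < q y" using om_ge[OF P U, of x y] True q_def by simp
    ultimately show ?thesis by (simp add: ln_div algebra_simps)
  next
    case False
    have z: "P x * U x y = 0" by (rule PU_zero[OF P U False])
    then have "P x * (U x y * ln (U x y)) = 0" by (metis mult.assoc mult_zero_left)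
    then show ?thesis by (simp only: z mult_zero_left diff_self)
  qed
  have "ii P U = (\<Sum>x\<in>UNIV. \<Sum>y\<in>UNIV. P x * (U x y * ln (U x y)) - P x * U x y * ln (q y))"
    unfolding ii_def q_def[symmetric] by (simp only: trm)
  also have "\<dots> = (\<Sum>x\<in>UNIV. \<Sum>y\<in>UNIV. P x * (U x y * ln (U x y))) - (\<Sum>x\<in>UNIV. \<Sum>y\<in>UNIV. P x * U x y * ln (q y))"
    by (simp only: sum_subtractf)
  also have "(\<Sum>x\<in>UNIV. \<Sum>y\<in>UNIV. P x * U x y * ln (q y)) = (\<Sum>y\<in>UNIV. q y * ln (q y))"
    by (subst sum.swap) (simp add: q_def out_marg_def sum_distrib_right)
  finally show ?thesis unfolding q_def .
qed

lemma cont_om: "continuous_on S (\<lambda>U. out_marg P U y)"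
  unfolding out_marg_def by (intro continuous_on_sum continuous_on_mult continuous_on_const coord2)

lemma cont_dd: assumes W: "is_channel W" shows "continuous_on (Kset P W) (\<lambda>U. dd P U W)"
  unfolding dd_def
proof (intro continuous_on_sum)
  fix x y
  have cg: "continuous_on (Kset P W) (\<lambda>U. U x y * ln (U x y / W x y))"
    by (rule cont_comp_nonneg[OF cont_g[OF ch_nonneg[OF W]] coord2]) (auto simp: Kset_def ch_nonneg)
  show "continuous_on (Kset P W) (\<lambda>U. P x * U x y * ln (U x y / W x y))"
    using continuous_on_mult[OF continuous_on_const[of _ "P x"] cg] by (simp add: mult.assoc)
qed

lemma cont_ii: assumes P: "is_dist P" shows "continuous_on (Kset P W) (\<lambda>U. ii P U)"
proof -
  have e: "\<And>U. U \<in> Kset P W \<Longrightarrow> ii P U = (\<Sum>x\<in>UNIV. \<Sum>y\<in>UNIV. P x * (U x y * ln (U x y))) - (\<Sum>y\<in>UNIV. out_marg P U y * ln (out_marg P U y))"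
    using ii_alt[OF P] by (auto simp: Kset_def)
  have c1: "continuous_on (Kset P W) (\<lambda>U. U x y * ln (U x y))" for x y
    by (rule cont_comp_nonneg[OF cont_h coord2]) (auto simp: Kset_def ch_nonneg)
  have c2: "continuous_on (Kset P W) (\<lambda>U. out_marg P U y * ln (out_marg P U y))" for y
    by (rule cont_comp_nonneg[OF cont_h cont_om]) (auto simp: Kset_def om_nonneg[OF P])
  have "continuous_on (Kset P W) (\<lambda>U. (\<Sum>x\<in>UNIV. \<Sum>y\<in>UNIV. P x * (U x y * ln (U x y))) - (\<Sum>y\<in>UNIV. out_marg P U y * ln (out_marg P U y)))"
    by (intro continuous_on_diff continuous_on_sum continuous_on_mult continuous_on_const c1 c2)
  then show ?thesis by (rule continuous_on_eq) (simp add: e)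
qed

lemma cont_bb: "continuous_on S (\<lambda>U. bb P U W)"
  unfolding bb_def by (intro continuous_on_sum continuous_on_mult[OF continuous_on_mult[OF continuous_on_const coord2] continuous_on_const])

definition comb :: "real \<Rightarrow> ('a \<Rightarrow> 'b \<Rightarrow> real) \<Rightarrow> real \<Rightarrow> ('a \<Rightarrow> 'b \<Rightarrow> real) \<Rightarrow> ('a \<Rightarrow> 'b \<Rightarrow> real)" where
  "comb u U1 v U2 = (\<lambda>x y. u * U1 x y + v * U2 x y)"

lemma comb_channel:
  assumes "is_channel U1" "is_channel U2" "0 \<le> u" "0 \<le> v" "u + v = 1"
  shows "is_channel (comb u U1 v U2)"
proof -
  have "0 \<le> comb u U1 v U2 x y" for x y
    unfolding comb_def using assms ch_nonneg[OF assms(1)] ch_nonneg[OF assms(2)] by simp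
  moreover have "(\<Sum>y\<in>UNIV. comb u U1 v U2 x y) = 1" for x
    unfolding comb_def using assms ch_sum[OF assms(1)] ch_sum[OF assms(2)]
    by (simp add: sum.distrib flip: sum_distrib_left)
  ultimately show ?thesis by (simp add: is_channel_def is_dist_def)
qed

lemma comb_Kset:
  assumes P: "is_dist P" and "U1 \<in> Kset P W" "U2 \<in> Kset P W" "0 \<le> u" "0 \<le> v" "u + v = 1"
  shows "comb u U1 v U2 \<in> Kset P W"
proof -
  have U1: "is_channel U1" "good P U1 W" and U2: "is_channel U2" "good P U2 W" using assms by (auto simp: Kset_def)
  have "W x y \<noteq> 0" if "0 < P x * comb u U1 v U2 x y" for x y
  proof -
    have "P x * comb u U1 v U2 x y = u * (P x * U1 x y) + v * (P x * U2 x y)" by (simp add: comb_def algebra_simps)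
    with that have "0 < u * (P x * U1 x y) \<or> 0 < v * (P x * U2 x y)" by linarith
    then have "0 < P x * U1 x y \<or> 0 < P x * U2 x y"
      using assms(4,5) by (auto simp: zero_less_mult_iff)
    then show ?thesis using U1(2) U2(2) by (auto simp: good_def)
  qed
  then show ?thesis using comb_channel[OF U1(1) U2(1) assms(4-6)] by (simp add: Kset_def good_def)
qed

lemma scale_ln: "0 \<le> (u::real) \<Longrightarrow> (u * a) * ln ((u * a) / (u * b)) = u * (a * ln (a / b))"
  by (cases "u = 0") simp_all

lemma dd_convex:
  assumes W: "is_channel W" and P: "is_dist P" and U1: "is_channel U1" and U2: "is_channel U2"
    and uv: "0 \<le> u" "0 \<le> v" "u + v = 1"
  shows "dd P (comb u U1 v U2) W \<le> u * dd P U1 W + v * dd P U2 W"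
proof -
  have core: "(u * U1 x y + v * U2 x y) * ln ((u * U1 x y + v * U2 x y) / W x y)
      \<le> u * (U1 x y * ln (U1 x y / W x y)) + v * (U2 x y * ln (U2 x y / W x y))" for x y
  proof (cases "W x y = 0")
    case True then show ?thesis by simp
  next
    case False
    have w: "0 < W x y" using False ch_nonneg[OF W, of x y] by simp
    have A: "(u * U1 x y + v * U2 x y) * ln ((u * U1 x y + v * U2 x y) / (u * W x y + v * W x y))
        \<le> (u * U1 x y) * ln ((u * U1 x y) / (u * W x y)) + (v * U2 x y) * ln ((v * U2 x y) / (v * W x y))"
      by (rule logsum2) (use uv w ch_nonneg[OF U1, of x y] ch_nonneg[OF U2, of x y] in auto)
    have e3: "u * W x y + v * W x y = W x y" using uv by (simp flip: distrib_right)
    have e1: "(u * U1 x y) * ln ((u * U1 x y) / (u * W x y)) = u * (U1 x y * ln (U1 x y / W x y))"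
      by (rule scale_ln) (use uv in simp)
    have e2: "(v * U2 x y) * ln ((v * U2 x y) / (v * W x y)) = v * (U2 x y * ln (U2 x y / W x y))"
      by (rule scale_ln) (use uv in simp)
    show ?thesis using A unfolding e1 e2 e3 .
  qed
  have trm: "P x * comb u U1 v U2 x y * ln (comb u U1 v U2 x y / W x y)
      \<le> u * (P x * U1 x y * ln (U1 x y / W x y)) + v * (P x * U2 x y * ln (U2 x y / W x y))" for x y
  proof -
    have "P x * ((u * U1 x y + v * U2 x y) * ln ((u * U1 x y + v * U2 x y) / W x y))
      \<le> P x * (u * (U1 x y * ln (U1 x y / W x y)) + v * (U2 x y * ln (U2 x y / W x y)))"
      by (rule mult_left_mono[OF core dist_nonneg[OF P]])
    then show ?thesis by (simp add: comb_def algebra_simps)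
  qed
  have "dd P (comb u U1 v U2) W \<le> (\<Sum>x\<in>UNIV. \<Sum>y\<in>UNIV. u * (P x * U1 x y * ln (U1 x y / W x y)) + v * (P x * U2 x y * ln (U2 x y / W x y)))"
    unfolding dd_def by (intro sum_mono trm)
  also have "\<dots> = u * dd P U1 W + v * dd P U2 W"
    unfolding dd_def by (simp only: sum.distrib sum_distrib_left)
  finally show ?thesis .
qed

lemma om_comb: "out_marg P (comb u U1 v U2) y = u * out_marg P U1 y + v * out_marg P U2 y"
  unfolding out_marg_def comb_def by (simp add: algebra_simps sum.distrib sum_distrib_left)

lemma ii_convex:
  assumes P: "is_dist P" and U1: "is_channel U1" and U2: "is_channel U2"
    and uv: "0 \<le> u" "0 \<le> v" "u + v = 1"
  shows "ii P (comb u U1 v U2) \<le> u * ii P U1 + v * ii P U2"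
proof -
  define q1 where "q1 = out_marg P U1"
  define q2 where "q2 = out_marg P U2"
  have trm: "P x * comb u U1 v U2 x y * ln (comb u U1 v U2 x y / out_marg P (comb u U1 v U2) y)
      \<le> u * (P x * U1 x y * ln (U1 x y / q1 y)) + v * (P x * U2 x y * ln (U2 x y / q2 y))" for x y
  proof (cases "P x = 0")
    case True then show ?thesis by simp
  next
    case False
    then have p: "0 < P x" using dist_nonneg[OF P, of x] by simp
    have g1: "P x * U1 x y \<le> q1 y" unfolding q1_def by (rule om_ge[OF P U1])
    have g2: "P x * U2 x y \<le> q2 y" unfolding q2_def by (rule om_ge[OF P U2])
    have n1: "0 \<le> P x * U1 x y" "0 \<le> P x * U2 x y" using p ch_nonneg[OF U1, of x y] ch_nonneg[OF U2, of x y] by simp_all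
    have A: "(u * (P x * U1 x y) + v * (P x * U2 x y)) * ln ((u * (P x * U1 x y) + v * (P x * U2 x y)) / (u * (P x * q1 y) + v * (P x * q2 y)))
        \<le> (u * (P x * U1 x y)) * ln ((u * (P x * U1 x y)) / (u * (P x * q1 y))) + (v * (P x * U2 x y)) * ln ((v * (P x * U2 x y)) / (v * (P x * q2 y)))"
    proof (rule logsum2)
      show "u * (P x * q1 y) = 0 \<Longrightarrow> u * (P x * U1 x y) = 0" using g1 n1 p by auto
      show "v * (P x * q2 y) = 0 \<Longrightarrow> v * (P x * U2 x y) = 0" using g2 n1 p by auto
    qed (use uv n1 g1 g2 p in auto)
    have e1: "(u * (P x * U1 x y)) * ln ((u * (P x * U1 x y)) / (u * (P x * q1 y))) = u * (P x * U1 x y * ln (U1 x y / q1 y))"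
    proof -
      have "(u * (P x * U1 x y)) * ln ((u * (P x * U1 x y)) / (u * (P x * q1 y))) = u * ((P x * U1 x y) * ln ((P x * U1 x y) / (P x * q1 y)))"
        by (rule scale_ln) (use uv in simp)
      also have "(P x * U1 x y) * ln ((P x * U1 x y) / (P x * q1 y)) = P x * (U1 x y * ln (U1 x y / q1 y))"
        by (rule scale_ln) (use p in simp)
      finally show ?thesis by (simp only: mult.assoc)
    qed
    have e2: "(v * (P x * U2 x y)) * ln ((v * (P x * U2 x y)) / (v * (P x * q2 y))) = v * (P x * U2 x y * ln (U2 x y / q2 y))"
    proof -
      have "(v * (P x * U2 x y)) * ln ((v * (P x * U2 x y)) / (v * (P x * q2 y))) = v * ((P x * U2 x y) * ln ((P x * U2 x y) / (P x * q2 y)))"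
        by (rule scale_ln) (use uv in simp)
      also have "(P x * U2 x y) * ln ((P x * U2 x y) / (P x * q2 y)) = P x * (U2 x y * ln (U2 x y / q2 y))"
        by (rule scale_ln) (use p in simp)
      finally show ?thesis by (simp only: mult.assoc)
    qed
    have e4: "u * (P x * U1 x y) + v * (P x * U2 x y) = P x * comb u U1 v U2 x y" by (simp add: comb_def algebra_simps)
    have e5: "u * (P x * q1 y) + v * (P x * q2 y) = P x * out_marg P (comb u U1 v U2) y"
      by (simp add: om_comb q1_def q2_def algebra_simps)
    have e6: "(P x * comb u U1 v U2 x y) * ln ((P x * comb u U1 v U2 x y) / (P x * out_marg P (comb u U1 v U2) y))
        = P x * (comb u U1 v U2 x y * ln (comb u U1 v U2 x y / out_marg P (comb u U1 v U2) y))"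
      by (rule scale_ln) (use p in simp)
    show ?thesis using A unfolding e1 e2 e4 e5 e6 by (simp only: mult.assoc)
  qed
  have "ii P (comb u U1 v U2) \<le> (\<Sum>x\<in>UNIV. \<Sum>y\<in>UNIV. u * (P x * U1 x y * ln (U1 x y / q1 y)) + v * (P x * U2 x y * ln (U2 x y / q2 y)))"
    unfolding ii_def by (intro sum_mono trm)
  also have "\<dots> = u * ii P U1 + v * ii P U2"
    unfolding ii_def q1_def q2_def by (simp only: sum.distrib sum_distrib_left)
  finally show ?thesis .
qed

lemma bb_comb: "bb P (comb u U1 v U2) W = u * bb P U1 W + v * bb P U2 W"
proof -
  have "bb P (comb u U1 v U2) W = (\<Sum>x\<in>UNIV. \<Sum>y\<in>UNIV. u * (P x * U1 x y * (- ln (W x y))) + v * (P x * U2 x y * (- ln (W x y))))"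
    unfolding bb_def comb_def by (intro sum.cong refl) (simp add: algebra_simps)
  also have "\<dots> = u * bb P U1 W + v * bb P U2 W"
    unfolding bb_def by (simp only: sum.distrib sum_distrib_left)
  finally show ?thesis .
qed

definition FF :: "('a::finite \<Rightarrow> real) \<Rightarrow> ('a \<Rightarrow> 'b::finite \<Rightarrow> real) \<Rightarrow> real \<Rightarrow> real \<Rightarrow> ('a \<Rightarrow> 'b \<Rightarrow> real) \<Rightarrow> real \<times> real \<times> real" where
  "FF P W R K U = (dd P U W, ii P U - R, ii P U + bb P U W - K - R)"

definition orth :: "(real \<times> real \<times> real) set" where
  "orth = {z. 0 \<le> fst z \<and> 0 \<le> fst (snd z) \<and> 0 \<le> snd (snd z)}"

lemma orth_closed: "closed orth"
  unfolding orth_def by (intro closed_Collect_conj closed_Collect_le continuous_intros)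

lemma FF_cont: assumes W: "is_channel W" and P: "is_dist P" shows "continuous_on (Kset P W) (FF P W R K)"
  unfolding FF_def
  by (intro continuous_on_Pair continuous_on_diff continuous_on_add cont_dd[OF W] cont_ii[OF P] cont_bb continuous_on_const)

definition CC :: "('a::finite \<Rightarrow> real) \<Rightarrow> ('a \<Rightarrow> 'b::finite \<Rightarrow> real) \<Rightarrow> real \<Rightarrow> real \<Rightarrow> (real \<times> real \<times> real) set" where
  "CC P W R K = (\<Union>e\<in>orth. \<Union>f\<in>FF P W R K ` Kset P W. {e + f})"

lemma CC_closed: assumes W: "is_channel W" and P: "is_dist P" shows "closed (CC P W R K)"
  unfolding CC_def
  by (rule closed_compact_sums[OF orth_closed compact_continuous_image[OF FF_cont[OF W P] Kset_compact[OF P]]])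

lemma CC_mem: "z \<in> CC P W R K \<longleftrightarrow> (\<exists>e\<in>orth. \<exists>U\<in>Kset P W. z = e + FF P W R K U)"
  unfolding CC_def by auto

lemma CC_convex: assumes W: "is_channel W" and P: "is_dist P" shows "convex (CC P W R K)"
proof (rule convexI)
  fix z1 z2 :: "real \<times> real \<times> real" and u v :: real
  assume z1: "z1 \<in> CC P W R K" and z2: "z2 \<in> CC P W R K" and uv: "0 \<le> u" "0 \<le> v" "u + v = 1"
  obtain o1 U1 where o1: "o1 \<in> orth" "U1 \<in> Kset P W" "z1 = o1 + FF P W R K U1" using z1 CC_mem by blast
  obtain o2 U2 where o2: "o2 \<in> orth" "U2 \<in> Kset P W" "z2 = o2 + FF P W R K U2" using z2 CC_mem by blast
  have ch1: "is_channel U1" and ch2: "is_channel U2" using o1 o2 by (auto simp: Kset_def)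
  define U where "U = comb u U1 v U2"
  have UK: "U \<in> Kset P W" unfolding U_def by (rule comb_Kset[OF P o1(2) o2(2) uv])
  have d: "dd P U W \<le> u * dd P U1 W + v * dd P U2 W" unfolding U_def by (rule dd_convex[OF W P ch1 ch2 uv])
  have i: "ii P U \<le> u * ii P U1 + v * ii P U2" unfolding U_def by (rule ii_convex[OF P ch1 ch2 uv])
  have b: "bb P U W = u * bb P U1 W + v * bb P U2 W" unfolding U_def by (rule bb_comb)
  define o' where "o' = u *\<^sub>R z1 + v *\<^sub>R z2 - FF P W R K U"
  have "o' \<in> orth"
  proof -
    obtain a1 b1 c1 where oo1: "o1 = (a1, b1, c1)" by (cases o1) auto
    obtain a2 b2 c2 where oo2: "o2 = (a2, b2, c2)" by (cases o2) auto
    have n: "0 \<le> a1" "0 \<le> b1" "0 \<le> c1" "0 \<le> a2" "0 \<le> b2" "0 \<le> c2" using o1(1) o2(1) oo1 oo2 by (auto simp: orth_def)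
    have RR: "R * u + R * v = R" "K * u + K * v = K" using uv(3) by (simp_all flip: distrib_left)
    have "0 \<le> u * a1 + v * a2 + (u * dd P U1 W + v * dd P U2 W - dd P U W)"
      using n uv d by (intro add_nonneg_nonneg) auto
    moreover have "0 \<le> u * b1 + v * b2 + (u * ii P U1 + v * ii P U2 - ii P U)"
      using n uv i by (intro add_nonneg_nonneg) auto
    moreover have "0 \<le> u * c1 + v * c2 + (u * ii P U1 + v * ii P U2 - ii P U)"
      using n uv i by (intro add_nonneg_nonneg) auto
    ultimately show ?thesis
      unfolding o'_def orth_def o1(3) o2(3) oo1 oo2 FF_def b using RR
      by (simp add: algebra_simps)
  qed
  moreover have "u *\<^sub>R z1 + v *\<^sub>R z2 = o' + FF P W R K U" unfolding o'_def by simp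
  ultimately show "u *\<^sub>R z1 + v *\<^sub>R z2 \<in> CC P W R K" using UK CC_mem by blast
qed

lemma neg_coef:
  fixes \<alpha> B c :: real
  assumes "\<And>s. 0 \<le> s \<Longrightarrow> c < \<alpha> * s + B" shows "0 \<le> \<alpha>"
proof (rule ccontr)
  assume "\<not> 0 \<le> \<alpha>"
  then have a: "\<alpha> < 0" by simp
  define s where "s = (\<bar>B\<bar> + \<bar>c\<bar> + 1) / (- \<alpha>)"
  have s0: "0 \<le> s" unfolding s_def by (rule divide_nonneg_pos) (use a in auto)
  have "\<alpha> * s = - (\<bar>B\<bar> + \<bar>c\<bar> + 1)" using a by (simp add: s_def)
  then show False using assms[OF s0] by linarith
qed

lemma dd_nonneg:
  assumes W: "is_channel W" and P: "is_dist P" and "U \<in> Kset P W"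
  shows "0 \<le> dd P U W"
  using core[OF W P, of U 0 0] E0_zero[OF P W] assms(3) by (simp add: Kset_def)

lemma multipliers:
  fixes W :: "'a::finite \<Rightarrow> 'b::finite \<Rightarrow> real"
  assumes W: "is_channel W" and P: "is_dist P"
    and hyp: "\<And>U. U \<in> Kset P W \<Longrightarrow> ii P U \<le> R \<Longrightarrow> ii P U + bb P U W - K \<le> R \<Longrightarrow> t < dd P U W"
  shows "\<exists>\<rho> \<eta>. 0 \<le> \<eta> \<and> \<eta> \<le> \<rho> \<and> (\<forall>U\<in>Kset P W. t < dd P U W + \<rho> * ii P U + \<eta> * bb P U W - \<rho> * R - \<eta> * K)"
proof -
  have notin: "(t, 0, 0) \<notin> CC P W R K"
  proof
    assume "(t, 0, 0) \<in> CC P W R K"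
    then obtain e U where e: "e \<in> orth" "U \<in> Kset P W" "(t, 0, 0) = e + FF P W R K U" using CC_mem by blast
    obtain e1 e2 e3 where ee: "e = (e1, e2, e3)" by (cases e) auto
    have n: "0 \<le> e1" "0 \<le> e2" "0 \<le> e3" using e(1) ee by (auto simp: orth_def)
    have eqs: "t = e1 + dd P U W" "0 = e2 + (ii P U - R)" "0 = e3 + (ii P U + bb P U W - K - R)"
      using e(3) ee by (auto simp: FF_def)
    have "t < dd P U W" by (rule hyp[OF e(2)]) (use eqs n in linarith)+
    then show False using eqs n by linarith
  qed
  obtain a c where ac: "inner a (t, 0, 0) < c" "\<forall>x\<in>CC P W R K. c < inner a x"
    using separating_hyperplane_closed_point[OF CC_convex[OF W P] CC_closed[OF W P] notin] by blast
  obtain \<alpha> lam \<mu> where a: "a = (\<alpha>, lam, \<mu>)" by (cases a) auto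
  have key: "c < \<alpha> * (e1 + dd P U W) + lam * (e2 + (ii P U - R)) + \<mu> * (e3 + (ii P U + bb P U W - K - R))"
    if "0 \<le> e1" "0 \<le> e2" "0 \<le> e3" "U \<in> Kset P W" for e1 e2 e3 U
  proof -
    have "(e1, e2, e3) \<in> orth" using that by (simp add: orth_def)
    then have "(e1, e2, e3) + FF P W R K U \<in> CC P W R K" using that(4) CC_mem by blast
    then have "c < inner a ((e1, e2, e3) + FF P W R K U)" using ac(2) by blast
    then show ?thesis by (simp add: a FF_def inner_Pair algebra_simps)
  qed
  have WK: "W \<in> Kset P W" by (rule W_in_Kset[OF W])
  have a0: "0 \<le> \<alpha>"
  proof (rule neg_coef)
    fix s :: real assume "0 \<le> s"
    then show "c < \<alpha> * s + (\<alpha> * dd P W W + lam * (ii P W - R) + \<mu> * (ii P W + bb P W W - K - R))"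
      using key[of s 0 0 W] WK by (simp add: algebra_simps)
  qed
  have l0: "0 \<le> lam"
  proof (rule neg_coef)
    fix s :: real assume "0 \<le> s"
    then show "c < lam * s + (\<alpha> * dd P W W + lam * (ii P W - R) + \<mu> * (ii P W + bb P W W - K - R))"
      using key[of 0 s 0 W] WK by (simp add: algebra_simps)
  qed
  have m0: "0 \<le> \<mu>"
  proof (rule neg_coef)
    fix s :: real assume "0 \<le> s"
    then show "c < \<mu> * s + (\<alpha> * dd P W W + lam * (ii P W - R) + \<mu> * (ii P W + bb P W W - K - R))"
      using key[of 0 0 s W] WK by (simp add: algebra_simps)
  qed
  define B0 where "B0 = (\<lambda>U. lam * (ii P U - R) + \<mu> * (ii P U + bb P U W - K - R))"
  have key0: "c < \<alpha> * dd P U W + B0 U" if "U \<in> Kset P W" for U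
    using key[of 0 0 0 U] that by (simp add: B0_def)
  have at: "\<alpha> * t < c" using ac(1) by (simp add: a inner_Pair)
  show ?thesis
  proof (cases "\<alpha> = 0")
    case False
    then have ap: "0 < \<alpha>" using a0 by simp
    define \<rho> where "\<rho> = (lam + \<mu>) / \<alpha>"
    define \<eta> where "\<eta> = \<mu> / \<alpha>"
    have "0 \<le> \<eta>" "\<eta> \<le> \<rho>" using ap l0 m0 by (auto simp: \<rho>_def \<eta>_def divide_right_mono)
    moreover have "t < dd P U W + \<rho> * ii P U + \<eta> * bb P U W - \<rho> * R - \<eta> * K" if "U \<in> Kset P W" for U
    proof -
      have "dd P U W + \<rho> * ii P U + \<eta> * bb P U W - \<rho> * R - \<eta> * K = (\<alpha> * dd P U W + B0 U) / \<alpha>"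
        using ap by (simp add: \<rho>_def \<eta>_def B0_def field_simps)
      moreover have "\<alpha> * t < \<alpha> * dd P U W + B0 U" using key0[OF that] at by simp
      ultimately show ?thesis using ap by (simp add: pos_less_divide_eq mult.commute)
    qed
    ultimately show ?thesis by blast
  next
    case True
    then have cp: "0 < c" using at by simp
    define s where "s = (\<bar>t\<bar> + 1) / c"
    have sp: "0 < s" using cp by (simp add: s_def add_pos_nonneg)
    define \<rho> where "\<rho> = s * (lam + \<mu>)"
    define \<eta> where "\<eta> = s * \<mu>"
    have "0 \<le> \<eta>" "\<eta> \<le> \<rho>" using sp l0 m0 by (auto simp: \<rho>_def \<eta>_def)
    moreover have "t < dd P U W + \<rho> * ii P U + \<eta> * bb P U W - \<rho> * R - \<eta> * K" if "U \<in> Kset P W" for U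
    proof -
      have e: "\<rho> * ii P U + \<eta> * bb P U W - \<rho> * R - \<eta> * K = s * B0 U"
        by (simp add: \<rho>_def \<eta>_def B0_def algebra_simps)
      have "c < B0 U" using key0[OF that] True by simp
      then have "s * c < s * B0 U" using sp by simp
      moreover have "s * c = \<bar>t\<bar> + 1" using cp by (simp add: s_def)
      moreover have "0 \<le> dd P U W" by (rule dd_nonneg[OF W P that])
      ultimately show ?thesis using e by linarith
    qed
    ultimately show ?thesis by blast
  qed
qed

lemma hard:
  fixes W :: "'a::finite \<Rightarrow> 'b::finite \<Rightarrow> real"
  assumes W: "is_channel W" and P: "is_dist P"
    and hyp: "\<And>U. U \<in> Kset P W \<Longrightarrow> ii P U \<le> R \<Longrightarrow> ii P U + bb P U W - K \<le> R \<Longrightarrow> t < dd P U W"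
  shows "\<exists>P' \<rho> \<eta>. is_dist P' \<and> 0 \<le> \<eta> \<and> \<eta> \<le> \<rho> \<and> t < E_0 W \<rho> \<eta> P' - \<rho> * R - \<eta> * K"
proof -
  obtain \<rho> \<eta> where re: "0 \<le> \<eta>" "\<eta> \<le> \<rho>"
    and all: "\<forall>U\<in>Kset P W. t < dd P U W + \<rho> * ii P U + \<eta> * bb P U W - \<rho> * R - \<eta> * K"
    using multipliers[OF W P hyp] by blast
  obtain P' U where PU: "is_dist P'" "is_channel U" "good P U W"
    and le: "dd P U W + \<rho> * ii P U + \<eta> * bb P U W \<le> E_0 W \<rho> \<eta> P'"
    using pieceB[OF W P re] by blast
  have "U \<in> Kset P W" using PU by (simp add: Kset_def)
  then have "t < dd P U W + \<rho> * ii P U + \<eta> * bb P U W - \<rho> * R - \<eta> * K" using all by blast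
  then have "t < E_0 W \<rho> \<eta> P' - \<rho> * R - \<eta> * K" using le by linarith
  then show ?thesis using PU(1) re by blast
qed

lemma feas_iff: "ereal i + max 0 (ereal b - ereal K) \<le> ereal R \<longleftrightarrow> i \<le> R \<and> i + b - K \<le> R"
proof -
  have m: "max 0 (ereal b - ereal K) = ereal (max 0 (b - K))"
    by (simp add: max_def zero_ereal_def)
  have "ereal i + max 0 (ereal b - ereal K) = ereal (i + max 0 (b - K))"
    by (simp only: m plus_ereal.simps(1))
  then show ?thesis by (auto simp: max_def)
qed

lemma lower:
  fixes W :: "'a::finite \<Rightarrow> 'b::finite \<Rightarrow> real"
  assumes W: "is_channel W" and P: "is_dist P" and re: "0 \<le> \<eta>" "\<eta> \<le> \<rho>"
    and U: "is_channel U" and feas: "ereal (mut_info P U) + max 0 (B_PU P U W - ereal K) \<le> ereal R"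
  shows "ereal (E_0 W \<rho> \<eta> P - \<rho> * R - \<eta> * K) \<le> cond_div P U W"
proof (cases "good P U W")
  case False then show ?thesis by (simp add: cond_div_bad)
next
  case True
  have f: "ii P U \<le> R" "ii P U + bb P U W - K \<le> R"
    using feas unfolding mut_info_ii B_good[OF True] feas_iff by auto
  have c: "E_0 W \<rho> \<eta> P \<le> dd P U W + \<rho> * ii P U + \<eta> * bb P U W"
    by (rule core[OF W P U True re])
  have "(\<rho> - \<eta>) * ii P U \<le> (\<rho> - \<eta>) * R" using f re by (intro mult_left_mono) auto
  moreover have "\<eta> * (ii P U + bb P U W - K) \<le> \<eta> * R" using f re by (intro mult_left_mono) auto
  ultimately have "\<rho> * ii P U + \<eta> * bb P U W \<le> \<rho> * R + \<eta> * K" by (simp add: algebra_simps)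
  then show ?thesis using c by (simp add: cond_div_good[OF True])
qed

theorem lemma10:
  fixes W :: "'a::finite \<Rightarrow> 'b::finite \<Rightarrow> real" and R K :: real
  assumes "is_channel W" and "R > 0" and "K > 0"
  shows "E_e W R K =
    (SUP P\<in>{P. is_dist P}.
       SUP \<rho>\<eta>\<in>{(\<rho>, \<eta>). 0 \<le> \<eta> \<and> \<eta> \<le> \<rho>}.
         ereal (E_0 W (fst \<rho>\<eta>) (snd \<rho>\<eta>) P - fst \<rho>\<eta> * R - snd \<rho>\<eta> * K))"
    (is "_ = ?RHS")
proof (rule antisym)
  note W = assms(1)
  show "E_e W R K \<le> ?RHS"
    unfolding E_e_def
  proof (rule SUP_least)
    fix P :: "'a \<Rightarrow> real" assume "P \<in> {P. is_dist P}"
    then have P: "is_dist P" by simp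
    show "(INF U\<in>{U. is_channel U \<and> ereal (mut_info P U) + max 0 (B_PU P U W - ereal K) \<le> ereal R}. cond_div P U W) \<le> ?RHS"
    proof (rule ereal_le_real)
      fix z assume z: "?RHS \<le> ereal z"
      show "(INF U\<in>{U. is_channel U \<and> ereal (mut_info P U) + max 0 (B_PU P U W - ereal K) \<le> ereal R}. cond_div P U W) \<le> ereal z"
      proof (rule ccontr)
        assume "\<not> ?thesis"
        then have lt: "ereal z < (INF U\<in>{U. is_channel U \<and> ereal (mut_info P U) + max 0 (B_PU P U W - ereal K) \<le> ereal R}. cond_div P U W)"
          by simp
        have hyp: "z < dd P U W" if "U \<in> Kset P W" "ii P U \<le> R" "ii P U + bb P U W - K \<le> R" for U
        proof -
          have U: "is_channel U" "good P U W" using that(1) by (auto simp: Kset_def)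
          have "ereal (mut_info P U) + max 0 (B_PU P U W - ereal K) \<le> ereal R"
            unfolding mut_info_ii B_good[OF U(2)] feas_iff using that(2,3) by simp
          then have "ereal z < cond_div P U W" using less_INF_D[OF lt] U(1) by blast
          then show ?thesis by (simp add: cond_div_good[OF U(2)])
        qed
        obtain P' \<rho> \<eta> where PP: "is_dist P'" "0 \<le> \<eta>" "\<eta> \<le> \<rho>" "z < E_0 W \<rho> \<eta> P' - \<rho> * R - \<eta> * K"
          using hard[OF W P hyp] by blast
        have "ereal (E_0 W \<rho> \<eta> P' - \<rho> * R - \<eta> * K) \<le> ?RHS"
        proof (rule SUP_upper2[of P'])
          show "P' \<in> {P. is_dist P}" using PP by simp
          show "ereal (E_0 W \<rho> \<eta> P' - \<rho> * R - \<eta> * K) \<le> (SUP \<rho>\<eta>\<in>{(\<rho>, \<eta>). 0 \<le> \<eta> \<and> \<eta> \<le> \<rho>}.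
              ereal (E_0 W (fst \<rho>\<eta>) (snd \<rho>\<eta>) P' - fst \<rho>\<eta> * R - snd \<rho>\<eta> * K))"
            by (rule SUP_upper2[of "(\<rho>, \<eta>)"]) (use PP in auto)
        qed
        then have "ereal (E_0 W \<rho> \<eta> P' - \<rho> * R - \<eta> * K) \<le> ereal z" using z by (rule order_trans)
        then show False using PP(4) by simp
      qed
    qed
  qed
  show "?RHS \<le> E_e W R K"
  proof (intro SUP_least, clarify)
    fix P :: "'a \<Rightarrow> real" and \<rho> \<eta> :: real
    assume P: "is_dist P" and re: "0 \<le> \<eta>" "\<eta> \<le> \<rho>"
    have "ereal (E_0 W \<rho> \<eta> P - \<rho> * R - \<eta> * K) \<le>
        (INF U\<in>{U. is_channel U \<and> ereal (mut_info P U) + max 0 (B_PU P U W - ereal K) \<le> ereal R}. cond_div P U W)"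
      by (rule INF_greatest) (use lower[OF W P re] in blast)
    also have "\<dots> \<le> E_e W R K" unfolding E_e_def by (rule SUP_upper) (simp add: P)
    finally show "ereal (E_0 W (fst (\<rho>, \<eta>)) (snd (\<rho>, \<eta>)) P - fst (\<rho>, \<eta>) * R - snd (\<rho>, \<eta>) * K) \<le> E_e W R K"
      by simp
  qed
qed

end
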